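(* Let $\mathcal{H}_1,\mathcal{H}_2$ be finite-dimensional Hilbert spaces and let the set of free channels be $\mathcal{O}_{\mathrm{F}}=\bigcup_k\mathcal{O}_{\mathrm{F}_k}\subseteq\mathcal{O}(\mathcal{H}_1\to\mathcal{H}_2)$, where each $\mathcal{O}_{\mathrm{F}_k}$ is convex. For any resource channel $\Lambda\in\mathcal{O}(\mathcal{H}_1\to\mathcal{H}_2)\setminus\mathcal{O}_{\mathrm{F}}$, \[\inf_k\ \max_{\{p_i,\eta_i\}_i,\{M_i\}_i}\frac{p_{\mathrm{succ}}(\Lambda,\{p_i,\eta_i\}_i,\{M_i\}_i)}{\max_{\Xi_k\in\mathcal{O}_{\mathrm{F}_k}}p_{\mathrm{succ}}(\Xi_k,\{p_i,\eta_i\}_i,\{M_i\}_i)}=1+R_{\mathcal{O}_{\mathrm{F}}}(\Lambda).\]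
   Context: $\mathcal{O}(\mathcal{H}_1\to\mathcal{H}_2)$ is the set of quantum channels from operators on $\mathcal{H}_1$ to operators on $\mathcal{H}_2$; $\mathcal{I}_{\mathcal{H}_1}$ is the identity map on operators on $\mathcal{H}_1$. A state ensemble $\{p_i,\eta_i\}_i$ is a finite probability distribution with states $\eta_i$ on $\mathcal{H}_1\otimes\mathcal{H}_1$; $\{M_i\}_i$ is a POVM on $\mathcal{H}_1\otimes\mathcal{H}_2$; for a channel $\Gamma$, $p_{\mathrm{succ}}(\Gamma,\{p_i,\eta_i\}_i,\{M_i\}_i)=\sum_ip_i\operatorname{tr}[M_i(\mathcal{I}_{\mathcal{H}_1}\otimes\Gamma)(\eta_i)]$. The maximum is over all such ensembles and POVMs. The generalized robustness of a channel with respect to a set $\mathcal{G}$ of channels is $R_{\mathcal{G}}(\Lambda)=\min\{s\ge0:\exists\Theta\in\mathcal{O}(\mathcal{H}_1\to\mathcal{H}_2),\ \frac{\Lambda+s\Theta}{1+s}\in\mathcal{G}\}$. *)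

theory Defs
  imports "HOL-Analysis.Analysis" "HOL-Library.Extended_Real"
begin

text \<open>Operators on a finite-dimensional Hilbert space with orthonormal basis indexed by
  a finite type 'a are represented by their matrices  'a => 'a => complex.
  The tensor product space of spaces indexed by 'a and 'b is indexed by 'a * 'b.\<close>

type_synonym 'a op = "'a \<Rightarrow> 'a \<Rightarrow> complex"

definition tr :: "('a::finite) op \<Rightarrow> complex" where
  "tr A = (\<Sum>i\<in>UNIV. A i i)"

definition mmult :: "('a::finite) op \<Rightarrow> 'a op \<Rightarrow> 'a op" where
  "mmult A B = (\<lambda>i j. \<Sum>k\<in>UNIV. A i k * B k j)"

definition idop :: "'a op" where
  "idop = (\<lambda>i j. if i = j then 1 else 0)"

definition psd_on :: "'a set \<Rightarrow> 'a op \<Rightarrow> bool" where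
  "psd_on S A \<longleftrightarrow> (\<forall>v :: 'a \<Rightarrow> complex.
     Im (\<Sum>i\<in>S. \<Sum>j\<in>S. cnj (v i) * A i j * v j) = 0 \<and>
     Re (\<Sum>i\<in>S. \<Sum>j\<in>S. cnj (v i) * A i j * v j) \<ge> 0)"

definition psd :: "('a::finite) op \<Rightarrow> bool" where
  "psd A \<longleftrightarrow> psd_on UNIV A"

definition is_state :: "('a::finite) op \<Rightarrow> bool" where
  "is_state \<rho> \<longleftrightarrow> psd \<rho> \<and> tr \<rho> = 1"

text \<open>(id_C \<otimes> \<Gamma>) applied blockwise (correct for linear \<Gamma>).\<close>
definition id_tensor :: "('a op \<Rightarrow> 'b op) \<Rightarrow> ('c \<times> 'a) op \<Rightarrow> ('c \<times> 'b) op" where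
  "id_tensor \<Gamma> X = (\<lambda>(c, b) (c', b'). \<Gamma> (\<lambda>a a'. X (c, a) (c', a')) b b')"

definition is_linear_map :: "('a op \<Rightarrow> 'b op) \<Rightarrow> bool" where
  "is_linear_map \<Gamma> \<longleftrightarrow> (\<forall>X Y (c::complex).
     \<Gamma> (\<lambda>i j. c * X i j + Y i j) = (\<lambda>i j. c * \<Gamma> X i j + \<Gamma> Y i j))"

definition trace_preserving :: "(('a::finite) op \<Rightarrow> ('b::finite) op) \<Rightarrow> bool" where
  "trace_preserving \<Gamma> \<longleftrightarrow> (\<forall>X. tr (\<Gamma> X) = tr X)"

text \<open>Complete positivity: (id_n \<otimes> \<Gamma>) is positive for every ancilla dimension n
  (ancilla basis indexed by {..<n}).\<close>
definition completely_positive :: "(('a::finite) op \<Rightarrow> ('b::finite) op) \<Rightarrow> bool" where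
  "completely_positive \<Gamma> \<longleftrightarrow> (\<forall>(n::nat) (X :: (nat \<times> 'a) op).
     psd_on ({..<n} \<times> UNIV) X \<longrightarrow> psd_on ({..<n} \<times> UNIV) (id_tensor \<Gamma> X))"

definition channels :: "(('a::finite) op \<Rightarrow> ('b::finite) op) set" where
  "channels = {\<Gamma>. is_linear_map \<Gamma> \<and> trace_preserving \<Gamma> \<and> completely_positive \<Gamma>}"

definition convex_chans :: "(('a::finite) op \<Rightarrow> ('b::finite) op) set \<Rightarrow> bool" where
  "convex_chans G \<longleftrightarrow> (\<forall>\<Xi>1\<in>G. \<forall>\<Xi>2\<in>G. \<forall>t::real. 0 \<le> t \<and> t \<le> 1 \<longrightarrow>
     (\<lambda>X i j. of_real t * \<Xi>1 X i j + of_real (1 - t) * \<Xi>2 X i j) \<in> G)"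

text \<open>Discrimination tasks: a finite state ensemble {p_i, \<eta>_i}_{i<m} of states on H1\<otimes>H1
  together with a POVM {M_i}_{i<m} on H1\<otimes>H2.\<close>
definition tasks :: "(nat \<times> (nat \<Rightarrow> real) \<times> (nat \<Rightarrow> (('a::finite) \<times> 'a) op)
                        \<times> (nat \<Rightarrow> ('a \<times> ('b::finite)) op)) set" where
  "tasks = {(m, p, \<eta>, M).
      (\<forall>i<m. 0 \<le> p i) \<and> (\<Sum>i<m. p i) = 1 \<and> (\<forall>i<m. is_state (\<eta> i)) \<and>
      (\<forall>i<m. psd (M i)) \<and> (\<lambda>x y. \<Sum>i<m. M i x y) = idop}"

definition p_succ :: "(('a::finite) op \<Rightarrow> ('b::finite) op) \<Rightarrow>
    (nat \<times> (nat \<Rightarrow> real) \<times> (nat \<Rightarrow> ('a \<times> 'a) op) \<times> (nat \<Rightarrow> ('a \<times> 'b) op)) \<Rightarrow> real" where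
  "p_succ \<Gamma> T = (case T of (m, p, \<eta>, M) \<Rightarrow>
      (\<Sum>i<m. p i * Re (tr (mmult (M i) (id_tensor \<Gamma> (\<eta> i))))))"

text \<open>Generalized robustness (inf; +\<infinity> if no admissible s exists).\<close>
definition robustness :: "(('a::finite) op \<Rightarrow> ('b::finite) op) set \<Rightarrow> ('a op \<Rightarrow> 'b op) \<Rightarrow> ereal" where
  "robustness G \<Lambda> = Inf {ereal s | s. 0 \<le> s \<and> (\<exists>\<Theta>\<in>channels.
      (\<lambda>X i j. (\<Lambda> X i j + of_real s * \<Theta> X i j) / of_real (1 + s)) \<in> G)}"

end

theory Submission
  imports Defs
begin

definition qf :: "'a set \<Rightarrow> 'a op \<Rightarrow> ('a \<Rightarrow> complex) \<Rightarrow> complex" where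
  "qf S A v = (\<Sum>i\<in>S. \<Sum>j\<in>S. cnj (v i) * A i j * v j)"

lemma psd_on_qf: "psd_on S A \<longleftrightarrow> (\<forall>v. Im (qf S A v) = 0 \<and> Re (qf S A v) \<ge> 0)"
  by (simp add: psd_on_def qf_def)

lemma qf_restrict:
  assumes "finite S" "T \<subseteq> S" "\<And>x. x \<notin> T \<Longrightarrow> v x = 0"
  shows "qf S A v = qf T A v"
proof -
  have "(\<Sum>i\<in>S. \<Sum>j\<in>S. cnj (v i) * A i j * v j) = (\<Sum>i\<in>T. \<Sum>j\<in>S. cnj (v i) * A i j * v j)"
    by (rule sum.mono_neutral_right) (use assms in \<open>auto intro: finite_subset\<close>)
  also have "\<dots> = (\<Sum>i\<in>T. \<Sum>j\<in>T. cnj (v i) * A i j * v j)"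
    by (intro sum.cong refl sum.mono_neutral_right) (use assms in \<open>auto intro: finite_subset\<close>)
  finally show ?thesis by (simp add: qf_def)
qed

lemma psd_on_subset:
  assumes "finite S" "T \<subseteq> S" "psd_on S A"
  shows "psd_on T A"
  unfolding psd_on_qf
proof
  fix v :: "'a \<Rightarrow> complex"
  let ?w = "\<lambda>x. if x \<in> T then v x else 0"
  have "qf T A v = qf T A ?w" by (simp add: qf_def)
  also have "\<dots> = qf S A ?w" by (rule qf_restrict[symmetric]) (use assms in auto)
  finally have e: "qf T A v = qf S A ?w" .
  have "Im (qf S A ?w) = 0 \<and> 0 \<le> Re (qf S A ?w)" using assms(3) unfolding psd_on_qf by blast
  then show "Im (qf T A v) = 0 \<and> 0 \<le> Re (qf T A v)" using e by simp
qed

lemma psd_diag: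
  assumes "psd_on S A" "i \<in> S" "finite S"
  shows "Im (A i i) = 0" "Re (A i i) \<ge> 0"
proof -
  let ?w = "\<lambda>x. if x = i then (1::complex) else 0"
  have "qf S A ?w = qf {i} A ?w" by (rule qf_restrict) (use assms in auto)
  also have "\<dots> = A i i" by (simp add: qf_def)
  finally show "Im (A i i) = 0" "Re (A i i) \<ge> 0" using assms(1) unfolding psd_on_qf by metis+
qed

lemma psd_herm:
  assumes "psd_on S A" "i \<in> S" "j \<in> S" "finite S"
  shows "A j i = cnj (A i j)"
proof (cases "i = j")
  case True
  then show ?thesis using psd_diag[OF assms(1,2,4)] by (simp add: complex_eq_iff)
next
  case False
  let ?w = "\<lambda>x. if x = i then (1::complex) else if x = j then 1 else 0"
  let ?u = "\<lambda>x. if x = i then (1::complex) else if x = j then \<i> else 0"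
  have "qf S A ?w = qf {i,j} A ?w" by (rule qf_restrict) (use assms in auto)
  also have "\<dots> = A i i + A i j + A j i + A j j" using False by (simp add: qf_def)
  finally have 1: "Im (A i i + A i j + A j i + A j j) = 0" using assms(1) unfolding psd_on_qf by metis
  have "qf S A ?u = qf {i,j} A ?u" by (rule qf_restrict) (use assms in auto)
  also have "\<dots> = A i i + A i j * \<i> - \<i> * A j i + A j j" using False by (simp add: qf_def algebra_simps)
  finally have 2: "Im (A i i + A i j * \<i> - \<i> * A j i + A j j) = 0" using assms(1) unfolding psd_on_qf by metis
  have 3: "Im (A i i) = 0" "Im (A j j) = 0" using psd_diag(1)[OF assms(1,2,4)] psd_diag(1)[OF assms(1,3,4)] by auto
  have 4: "Im (A i j) + Im (A j i) = 0" using 1 3 by simp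
  have 5: "Re (A i j) - Re (A j i) = 0" using 2 3 by simp
  show ?thesis using 4 5 by (simp add: complex_eq_iff)
qed

lemma sum_delta_right:
  assumes "finite S" "i \<in> S"
  shows "(\<Sum>y\<in>S. f y * (if y = i then (\<alpha>::complex) else 0)) = f i * \<alpha>"
proof -
  have "(\<Sum>y\<in>S. f y * (if y = i then \<alpha> else 0)) = (\<Sum>y\<in>S. if y = i then f i * \<alpha> else 0)"
    by (intro sum.cong) auto
  then show ?thesis using assms by simp
qed

lemma sum_delta_left:
  assumes "finite S" "i \<in> S"
  shows "(\<Sum>y\<in>S. (if y = i then (\<alpha>::complex) else 0) * f y) = \<alpha> * f i"
  using sum_delta_right[OF assms, of f \<alpha>] by (simp add: mult.commute)

lemma qf_add_delta:
  assumes "finite S" "i \<in> S"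
  shows "qf S A (\<lambda>x. v x + (if x = i then \<alpha> else 0)) =
    qf S A v + cnj \<alpha> * (\<Sum>j\<in>S. A i j * v j) + \<alpha> * (\<Sum>x\<in>S. cnj (v x) * A x i) + cnj \<alpha> * \<alpha> * A i i"
proof -
  let ?d = "\<lambda>x. if x = i then \<alpha> else 0"
  have e: "cnj (v x + ?d x) * A x y * (v y + ?d y) =
     cnj (v x) * A x y * v y + (cnj (v x) * A x y) * ?d y + cnj (?d x) * (A x y * v y) + cnj (?d x) * (A x y * ?d y)" for x y
    by (simp add: algebra_simps)
  have c: "cnj (?d x) = (if x = i then cnj \<alpha> else 0)" for x by simp
  have "qf S A (\<lambda>x. v x + ?d x) = (\<Sum>x\<in>S. \<Sum>y\<in>S. cnj (v x) * A x y * v y) + (\<Sum>x\<in>S. \<Sum>y\<in>S. (cnj (v x) * A x y) * ?d y)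
     + (\<Sum>x\<in>S. \<Sum>y\<in>S. cnj (?d x) * (A x y * v y)) + (\<Sum>x\<in>S. \<Sum>y\<in>S. cnj (?d x) * (A x y * ?d y))"
    unfolding qf_def e by (simp add: sum.distrib)
  also have "(\<Sum>x\<in>S. \<Sum>y\<in>S. (cnj (v x) * A x y) * ?d y) = (\<Sum>x\<in>S. cnj (v x) * A x i * \<alpha>)"
    by (intro sum.cong refl sum_delta_right assms)
  also have "(\<Sum>x\<in>S. \<Sum>y\<in>S. cnj (?d x) * (A x y * v y)) = cnj \<alpha> * (\<Sum>y\<in>S. A i y * v y)"
    unfolding c sum_distrib_left[symmetric] by (rule sum_delta_left[OF assms])
  also have "(\<Sum>x\<in>S. \<Sum>y\<in>S. cnj (?d x) * (A x y * ?d y)) = cnj \<alpha> * (A i i * \<alpha>)"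
    unfolding c sum_distrib_left[symmetric] sum_delta_right[OF assms] by (rule sum_delta_left[OF assms])
  finally show ?thesis by (simp add: qf_def sum_distrib_left sum_distrib_right algebra_simps)
qed

lemma qf_delta:
  assumes "finite S" "j \<in> S"
  shows "qf S A (\<lambda>x. if x = j then 1 else 0) = A j j"
proof -
  have "qf S A (\<lambda>x. if x = j then 1 else 0) = qf {j} A (\<lambda>x. if x = j then 1 else 0)"
    by (rule qf_restrict) (use assms in auto)
  then show ?thesis by (simp add: qf_def)
qed

lemma psd_zero_row:
  assumes "finite S" "psd_on S A" "i \<in> S" "j \<in> S" "A i i = 0"
  shows "A i j = 0"
proof (rule ccontr)
  assume nz: "A i j \<noteq> 0"
  then have ij: "i \<noteq> j" using assms by auto
  define t where "t = (Re (A j j) + 1) / (2 * (cmod (A i j))^2)"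
  have tpos: "t > 0" using psd_diag(2)[OF assms(2,4,1)] nz by (auto simp: t_def)
  let ?e = "\<lambda>x. if x = j then (1::complex) else 0"
  let ?\<alpha> = "- of_real t * A i j"
  have h: "A j i = cnj (A i j)" by (rule psd_herm[OF assms(2,3,4,1)])
  have s1: "(\<Sum>y\<in>S. A i y * ?e y) = A i j" using sum_delta_right[OF assms(1,4), of "A i" 1] by simp
  have s2: "(\<Sum>x\<in>S. cnj (?e x) * A x i) = A j i"
    using sum_delta_left[OF assms(1,4), of 1 "\<lambda>x. A x i"] by (simp add: if_distrib cong: if_cong)
  have "qf S A (\<lambda>x. ?e x + (if x = i then ?\<alpha> else 0)) = A j j + cnj ?\<alpha> * A i j + ?\<alpha> * A j i"
    using qf_add_delta[OF assms(1,3), of A ?e ?\<alpha>] qf_delta[OF assms(1,4)] s1 s2 assms(5) by simp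
  also have "\<dots> = A j j - of_real (2 * t * (cmod (A i j))^2)"
  proof -
    have "complex_of_real (2 * t * (cmod (A i j))^2) = 2 * of_real t * (A i j * cnj (A i j))"
      using complex_norm_square[of "A i j"] by simp
    then show ?thesis unfolding h by (simp add: algebra_simps)
  qed
  also have "2 * t * (cmod (A i j))^2 = Re (A j j) + 1" using nz by (simp add: t_def)
  finally have "Re (qf S A (\<lambda>x. ?e x + (if x = i then ?\<alpha> else 0))) = -1" by simp
  moreover have "Re (qf S A (\<lambda>x. ?e x + (if x = i then ?\<alpha> else 0))) \<ge> 0"
    using assms(2) unfolding psd_on_qf by blast
  ultimately show False by linarith
qed


lemma psd_schur:
  assumes "finite S" "psd_on S A" "i \<in> S" "A i i \<noteq> 0"
  shows "psd_on S (\<lambda>x y. A x y - A x i * A i y / A i i)"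
  unfolding psd_on_qf
proof
  fix v :: "_ \<Rightarrow> complex"
  define a where "a = A i i"
  have ima: "Im a = 0" using psd_diag(1)[OF assms(2,3,1)] by (simp add: a_def)
  then have ca: "cnj a = a" by (simp add: complex_eq_iff)
  have a0: "a \<noteq> 0" using assms(4) by (simp add: a_def)
  define c where "c = (\<Sum>j\<in>S. A i j * v j)"
  have hc: "(\<Sum>x\<in>S. cnj (v x) * A x i) = cnj c"
    unfolding c_def cnj_sum by (intro sum.cong refl) (simp add: psd_herm[OF assms(2) assms(3) _ assms(1)] mult.commute)
  have "qf S (\<lambda>x y. A x y - A x i * A i y / A i i) v =
     qf S A v - (\<Sum>x\<in>S. \<Sum>y\<in>S. (cnj (v x) * A x i) * (A i y * v y)) / a"
    unfolding qf_def a_def by (simp add: algebra_simps sum_subtractf sum_divide_distrib)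
  also have "(\<Sum>x\<in>S. \<Sum>y\<in>S. (cnj (v x) * A x i) * (A i y * v y)) = cnj c * c"
    by (simp add: sum_product[symmetric] hc c_def)
  finally have qB: "qf S (\<lambda>x y. A x y - A x i * A i y / A i i) v = qf S A v - cnj c * c / a" .
  have "qf S A (\<lambda>x. v x + (if x = i then - c / a else 0)) =
      qf S A v + cnj (- c / a) * c + (- c / a) * cnj c + cnj (- c / a) * (- c / a) * a"
    using qf_add_delta[OF assms(1,3), of A v "- c / a"] hc by (simp add: c_def a_def)
  also have "\<dots> = qf S A v - cnj c * c / a"
    using a0 ca by (simp add: field_simps power2_eq_square)
  finally have "qf S (\<lambda>x y. A x y - A x i * A i y / A i i) v = qf S A (\<lambda>x. v x + (if x = i then - c / a else 0))"
    using qB by simp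
  then show "Im (qf S (\<lambda>x y. A x y - A x i * A i y / A i i) v) = 0 \<and>
      0 \<le> Re (qf S (\<lambda>x y. A x y - A x i * A i y / A i i) v)"
    using assms(2) unfolding psd_on_qf by simp
qed


lemma tr_psd:
  assumes "finite S" "psd_on S A" "psd_on S B"
  shows "Im (\<Sum>x\<in>S. \<Sum>y\<in>S. A x y * B y x) = 0 \<and> Re (\<Sum>x\<in>S. \<Sum>y\<in>S. A x y * B y x) \<ge> 0"
  using assms
proof (induction S arbitrary: A B rule: finite_induct)
  case empty
  then show ?case by simp
next
  case (insert i S)
  let ?T = "insert i S"
  have fT: "finite ?T" using insert by simp
  have reduce: "(\<Sum>x\<in>?T. \<Sum>y\<in>?T. A x y * C y x) = (\<Sum>x\<in>S. \<Sum>y\<in>S. A x y * C y x)"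
    if C: "\<forall>y\<in>?T. C i y = 0 \<and> C y i = 0" for C
  proof -
    have "(\<Sum>x\<in>?T. \<Sum>y\<in>?T. A x y * C y x) = (\<Sum>y\<in>?T. A i y * C y i) + (\<Sum>x\<in>S. \<Sum>y\<in>?T. A x y * C y x)"
      using insert by (simp add: sum.insert)
    also have "(\<Sum>y\<in>?T. A i y * C y i) = 0" by (rule sum.neutral) (use C in auto)
    also have "(\<Sum>x\<in>S. \<Sum>y\<in>?T. A x y * C y x) = (\<Sum>x\<in>S. \<Sum>y\<in>S. A x y * C y x)"
    proof (rule sum.cong[OF refl])
      fix x assume "x \<in> S"
      then show "(\<Sum>y\<in>?T. A x y * C y x) = (\<Sum>y\<in>S. A x y * C y x)"
        using insert C by (simp add: sum.insert)
    qed
    finally show ?thesis by simp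
  qed
  have AS: "psd_on S A" by (rule psd_on_subset[OF fT _ insert.prems(1)]) auto
  show ?case
  proof (cases "B i i = 0")
    case True
    have "\<forall>y\<in>?T. B i y = 0 \<and> B y i = 0"
    proof
      fix y assume y: "y \<in> ?T"
      have "B i y = 0" by (rule psd_zero_row[OF fT insert.prems(2) _ y True]) simp
      moreover have "B y i = cnj (B i y)" by (rule psd_herm[OF insert.prems(2) _ y fT]) simp
      ultimately show "B i y = 0 \<and> B y i = 0" by simp
    qed
    then have "(\<Sum>x\<in>?T. \<Sum>y\<in>?T. A x y * B y x) = (\<Sum>x\<in>S. \<Sum>y\<in>S. A x y * B y x)" by (rule reduce)
    moreover have "psd_on S B" by (rule psd_on_subset[OF fT _ insert.prems(2)]) auto
    ultimately show ?thesis using insert.IH[OF AS] by simp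
  next
    case False
    define B' where "B' = (\<lambda>x y. B x y - B x i * B i y / B i i)"
    have B'T: "psd_on ?T B'" unfolding B'_def by (rule psd_schur[OF fT insert.prems(2) _ False]) simp
    have B'S: "psd_on S B'" by (rule psd_on_subset[OF fT _ B'T]) auto
    have z: "\<forall>y\<in>?T. B' i y = 0 \<and> B' y i = 0" using False by (simp add: B'_def)
    obtain r where r: "B i i = of_real r" "r \<ge> 0"
      using psd_diag[OF insert.prems(2) _ fT, of i] by (metis complex_of_real_def complex_surj insertI1)
    define w where "w = (\<lambda>y. B y i)"
    have rank1: "(\<Sum>x\<in>?T. \<Sum>y\<in>?T. A x y * (B y i * B i x / B i i)) = qf ?T A w / B i i"
      unfolding qf_def w_def sum_divide_distrib
    proof (rule sum.cong[OF refl], rule sum.cong[OF refl])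
      fix x y assume x: "x \<in> ?T" and y: "y \<in> ?T"
      have "cnj (B x i) = B i x" using psd_herm[OF insert.prems(2) x _ fT] by simp
      then show "A x y * (B y i * B i x / B i i) = cnj (B x i) * A x y * B y i / B i i" by simp
    qed
    have q: "Im (qf ?T A w) = 0" "Re (qf ?T A w) \<ge> 0" using insert.prems(1) unfolding psd_on_qf by auto
    have "(\<Sum>x\<in>?T. \<Sum>y\<in>?T. A x y * B y x) =
        (\<Sum>x\<in>?T. \<Sum>y\<in>?T. A x y * B' y x + A x y * (B y i * B i x / B i i))"
      by (rule sum.cong[OF refl], rule sum.cong[OF refl]) (simp add: B'_def algebra_simps)
    also have "\<dots> =
        (\<Sum>x\<in>?T. \<Sum>y\<in>?T. A x y * B' y x) + (\<Sum>x\<in>?T. \<Sum>y\<in>?T. A x y * (B y i * B i x / B i i))"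
      by (simp add: sum.distrib)
    also have "(\<Sum>x\<in>?T. \<Sum>y\<in>?T. A x y * B' y x) = (\<Sum>x\<in>S. \<Sum>y\<in>S. A x y * B' y x)" by (rule reduce[OF z])
    finally have e: "(\<Sum>x\<in>?T. \<Sum>y\<in>?T. A x y * B y x) = (\<Sum>x\<in>S. \<Sum>y\<in>S. A x y * B' y x) + qf ?T A w / of_real r"
      using rank1 r by simp
    have "Im (qf ?T A w / of_real r) = 0" "Re (qf ?T A w / of_real r) \<ge> 0" using q r by auto
    then show ?thesis using e insert.IH[OF AS B'S] by simp
  qed
qed

definition Emat :: "'a \<Rightarrow> 'a \<Rightarrow> 'a op" where
  "Emat a a' = (\<lambda>x x'. if x = a \<and> x' = a' then 1 else 0)"

definition phi :: "('a \<times> 'a) op" where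
  "phi = (\<lambda>(c, a) (c', a'). if c = a \<and> c' = a' then 1 else 0)"

definition choi :: "('a op \<Rightarrow> 'b op) \<Rightarrow> ('a \<times> 'b) op" where
  "choi \<Gamma> = id_tensor \<Gamma> phi"

lemma choi_apply: "choi \<Gamma> (a, b) (a', b') = \<Gamma> (Emat a a') b b'"
  unfolding choi_def id_tensor_def phi_def Emat_def by (simp add: eq_commute)

lemma lin_zero: assumes "is_linear_map \<Gamma>" shows "\<Gamma> (\<lambda>i j. 0) = (\<lambda>i j. 0)"
proof -
  have "\<Gamma> (\<lambda>i j. 1 * 0 + 0) = (\<lambda>i j. 1 * \<Gamma> (\<lambda>i j. 0) i j + \<Gamma> (\<lambda>i j. 0) i j)"
    using assms unfolding is_linear_map_def
    by (drule_tac x="\<lambda>i j. 0" in spec, drule_tac x="\<lambda>i j. 0" in spec, drule_tac x=1 in spec) simp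
  then have "\<Gamma> (\<lambda>i j. 0) = (\<lambda>i j. \<Gamma> (\<lambda>i j. 0) i j + \<Gamma> (\<lambda>i j. 0) i j)" by simp
  then show ?thesis by (metis add_cancel_right_right)
qed

lemma lin_comb: assumes "is_linear_map \<Gamma>"
  shows "\<Gamma> (\<lambda>i j. c * X i j + Y i j) = (\<lambda>i j. c * \<Gamma> X i j + \<Gamma> Y i j)"
  using assms unfolding is_linear_map_def by blast

lemma lin_scale: assumes "is_linear_map \<Gamma>"
  shows "\<Gamma> (\<lambda>i j. c * X i j) = (\<lambda>i j. c * \<Gamma> X i j)"
  using lin_comb[OF assms, of c X "\<lambda>i j. 0"] lin_zero[OF assms] by simp

lemma lin_sum: assumes "is_linear_map \<Gamma>" "finite I"
  shows "\<Gamma> (\<lambda>i j. \<Sum>k\<in>I. c k * X k i j) = (\<lambda>i j. \<Sum>k\<in>I. c k * \<Gamma> (X k) i j)"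
  using assms(2)
proof (induction I rule: finite_induct)
  case empty
  then show ?case using lin_zero[OF assms(1)] by simp
next
  case (insert k I)
  have "\<Gamma> (\<lambda>i j. \<Sum>k\<in>insert k I. c k * X k i j) = \<Gamma> (\<lambda>i j. c k * X k i j + (\<Sum>k\<in>I. c k * X k i j))"
    using insert by simp
  also have "\<dots> = (\<lambda>i j. c k * \<Gamma> (X k) i j + \<Gamma> (\<lambda>i j. \<Sum>k\<in>I. c k * X k i j) i j)"
    by (rule lin_comb[OF assms(1)])
  finally show ?case using insert by simp
qed

lemma lin_expand: assumes "is_linear_map \<Gamma>"
  shows "\<Gamma> (A :: ('a::finite) op) b b' = (\<Sum>a\<in>UNIV. \<Sum>a'\<in>UNIV. A a a' * \<Gamma> (Emat a a') b b')"
proof -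
  have A: "A = (\<lambda>i j. \<Sum>p\<in>UNIV. A (fst p) (snd p) * Emat (fst p) (snd p) i j)"
  proof (intro ext)
    fix i j
    have "(\<Sum>p\<in>UNIV. A (fst p) (snd p) * Emat (fst p) (snd p) i j) = (\<Sum>p\<in>UNIV. if p = (i, j) then A i j else 0)"
      by (intro sum.cong refl) (auto simp: Emat_def)
    then show "A i j = (\<Sum>p\<in>UNIV. A (fst p) (snd p) * Emat (fst p) (snd p) i j)" by simp
  qed
  have "\<Gamma> A b b' = (\<Sum>p\<in>UNIV. A (fst p) (snd p) * \<Gamma> (Emat (fst p) (snd p)) b b')"
    by (subst A, subst lin_sum[OF assms]) auto
  also have "\<dots> = (\<Sum>a\<in>UNIV. \<Sum>a'\<in>UNIV. A a a' * \<Gamma> (Emat a a') b b')"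
    by (simp add: UNIV_Times_UNIV[symmetric] sum.cartesian_product case_prod_beta del: UNIV_Times_UNIV)
  finally show ?thesis .
qed

lemma id_tensor_expand: fixes \<Gamma> :: "('a::finite) op \<Rightarrow> 'b op" assumes "is_linear_map \<Gamma>"
  shows "id_tensor \<Gamma> X (c, b) (c', b') = (\<Sum>a\<in>UNIV. \<Sum>a'\<in>UNIV. X (c, a) (c', a') * choi \<Gamma> (a, b) (a', b'))"
  unfolding id_tensor_def choi_apply by (simp, subst lin_expand[OF assms], rule refl)

lemma tensor_qf:
  fixes \<Gamma> :: "('a::finite) op \<Rightarrow> ('b::finite) op" and C :: "'c set" and X :: "('c \<times> 'a) op"
  assumes lin: "is_linear_map \<Gamma>" and fC: "finite C"
  shows "qf (C \<times> UNIV) (id_tensor \<Gamma> X) v =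
    (\<Sum>p\<in>UNIV. \<Sum>q\<in>UNIV. choi \<Gamma> p q *
       (\<Sum>c\<in>C. \<Sum>c'\<in>C. X (c, fst p) (c', fst q) * v (c', snd q) * cnj (v (c, snd p))))"
proof -
  let ?S = "C \<times> (UNIV :: 'b set)"
  let ?J = "choi \<Gamma>"
  have fS: "finite ?S" using fC by simp
  have "qf ?S (id_tensor \<Gamma> X) v = (\<Sum>i\<in>?S. \<Sum>j\<in>?S. \<Sum>a\<in>UNIV. \<Sum>a'\<in>UNIV.
      cnj (v i) * X (fst i, a) (fst j, a') * ?J (a, snd i) (a', snd j) * v j)"
    unfolding qf_def
  proof (rule sum.cong[OF refl], rule sum.cong[OF refl])
    fix i j :: "'c \<times> 'b"
    obtain c b where i: "i = (c, b)" by fastforce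
    obtain c' b' where j: "j = (c', b')" by fastforce
    show "cnj (v i) * id_tensor \<Gamma> X i j * v j = (\<Sum>a\<in>UNIV. \<Sum>a'\<in>UNIV.
      cnj (v i) * X (fst i, a) (fst j, a') * ?J (a, snd i) (a', snd j) * v j)"
      unfolding i j id_tensor_expand[OF lin] by (simp add: sum_distrib_left sum_distrib_right mult.assoc)
  qed
  also have "\<dots> = (\<Sum>(i, j, a, a')\<in>?S \<times> ?S \<times> UNIV \<times> UNIV.
      cnj (v i) * X (fst i, a) (fst j, a') * ?J (a, snd i) (a', snd j) * v j)"
    by (simp add: sum.cartesian_product)
  also have "\<dots> = (\<Sum>(p, q, c, c')\<in>UNIV \<times> UNIV \<times> C \<times> C.
      ?J p q * (X (c, fst p) (c', fst q) * v (c', snd q) * cnj (v (c, snd p))))"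
    by (rule sum.reindex_bij_witness[where i = "\<lambda>(p, q, c, c'). ((c, snd p), (c', snd q), fst p, fst q)"
          and j = "\<lambda>(i, j, a, a'). ((a, snd i), (a', snd j), fst i, fst j)"]) (auto simp: algebra_simps)
  also have "\<dots> = (\<Sum>p\<in>UNIV. \<Sum>q\<in>UNIV. ?J p q *
       (\<Sum>c\<in>C. \<Sum>c'\<in>C. X (c, fst p) (c', fst q) * v (c', snd q) * cnj (v (c, snd p))))"
    by (simp add: sum.cartesian_product sum_distrib_left) (auto intro!: sum.cong)
  finally show ?thesis .
qed


lemma K_psd:
  fixes C :: "'c set" and X :: "('c \<times> 'a::finite) op" and v :: "'c \<times> 'b::finite \<Rightarrow> complex"
  assumes fC: "finite C" and X: "psd_on (C \<times> UNIV) X"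
  shows "psd (\<lambda>q p. \<Sum>c\<in>C. \<Sum>c'\<in>C. X (c, fst p) (c', fst q) * v (c', snd q) * cnj (v (c, snd p)))"
  unfolding psd_def psd_on_qf
proof
  fix w :: "'a \<times> 'b \<Rightarrow> complex"
  let ?B = "\<lambda>q p. \<Sum>c\<in>C. \<Sum>c'\<in>C. X (c, fst p) (c', fst q) * v (c', snd q) * cnj (v (c, snd p))"
  define z where "z = (\<lambda>(c, a). \<Sum>b\<in>UNIV. v (c, b) * cnj (w (a, b)))"
  let ?S = "C \<times> (UNIV :: 'a set)"
  have "qf UNIV ?B w = (\<Sum>(q, p, c, c')\<in>UNIV \<times> UNIV \<times> C \<times> C.
      cnj (w q) * X (c, fst p) (c', fst q) * v (c', snd q) * cnj (v (c, snd p)) * w p)"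
    unfolding qf_def by (simp add: sum.cartesian_product sum_distrib_left sum_distrib_right mult.assoc)
       (auto intro!: sum.cong simp: algebra_simps)
  also have "\<dots> = (\<Sum>(i, j, b, b')\<in>?S \<times> ?S \<times> UNIV \<times> UNIV.
      cnj (v (fst i, b)) * w (snd i, b) * X i j * (v (fst j, b') * cnj (w (snd j, b'))))"
    by (rule sum.reindex_bij_witness[where i = "\<lambda>(i, j, b, b'). ((snd j, b'), (snd i, b), fst i, fst j)"
          and j = "\<lambda>(q, p, c, c'). ((c, fst p), (c', fst q), snd p, snd q)"]) (auto simp: algebra_simps)
  also have "\<dots> = (\<Sum>i\<in>?S. \<Sum>j\<in>?S. \<Sum>b\<in>UNIV. \<Sum>b'\<in>UNIV.
      cnj (v (fst i, b)) * w (snd i, b) * X i j * (v (fst j, b') * cnj (w (snd j, b'))))"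
    by (simp add: sum.cartesian_product split_def)
  also have "\<dots> = qf ?S X z"
    unfolding qf_def
  proof (rule sum.cong[OF refl], rule sum.cong[OF refl])
    fix i j :: "'c \<times> 'a"
    have "cnj (z i) * X i j * z j = (\<Sum>b\<in>UNIV. cnj (v (fst i, b)) * w (snd i, b) * X i j) * z j"
      by (simp add: z_def split_def cnj_sum sum_distrib_right sum_distrib_left mult_ac)
    also have "\<dots> = (\<Sum>b\<in>UNIV. \<Sum>b'\<in>UNIV.
      cnj (v (fst i, b)) * w (snd i, b) * X i j * (v (fst j, b') * cnj (w (snd j, b'))))"
      by (simp add: z_def split_def sum_product)
    finally show "(\<Sum>b\<in>UNIV. \<Sum>b'\<in>UNIV.
      cnj (v (fst i, b)) * w (snd i, b) * X i j * (v (fst j, b') * cnj (w (snd j, b')))) = cnj (z i) * X i j * z j" by simp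
  qed
  finally have e: "qf UNIV ?B w = qf ?S X z" .
  show "Im (qf UNIV ?B w) = 0 \<and> 0 \<le> Re (qf UNIV ?B w)" using X unfolding e psd_on_qf by blast
qed

lemma tensor_psd:
  fixes \<Gamma> :: "('a::finite) op \<Rightarrow> ('b::finite) op" and C :: "'c set" and X :: "('c \<times> 'a) op"
  assumes lin: "is_linear_map \<Gamma>" and J: "psd (choi \<Gamma>)" and fC: "finite C" and X: "psd_on (C \<times> UNIV) X"
  shows "psd_on (C \<times> UNIV) (id_tensor \<Gamma> X)"
  unfolding psd_on_qf
proof
  fix v :: "'c \<times> 'b \<Rightarrow> complex"
  let ?B = "\<lambda>q p. \<Sum>c\<in>C. \<Sum>c'\<in>C. X (c, fst p) (c', fst q) * v (c', snd q) * cnj (v (c, snd p))"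
  have "psd ?B" by (rule K_psd[OF fC X])
  then have "Im (\<Sum>p\<in>UNIV. \<Sum>q\<in>UNIV. choi \<Gamma> p q * ?B q p) = 0 \<and> Re (\<Sum>p\<in>UNIV. \<Sum>q\<in>UNIV. choi \<Gamma> p q * ?B q p) \<ge> 0"
    using tr_psd[of UNIV "choi \<Gamma>" ?B] J unfolding psd_def by simp
  then show "Im (qf (C \<times> UNIV) (id_tensor \<Gamma> X) v) = 0 \<and> 0 \<le> Re (qf (C \<times> UNIV) (id_tensor \<Gamma> X) v)"
    unfolding tensor_qf[OF lin fC] .
qed


lemma choi_CP:
  fixes \<Gamma> :: "('a::finite) op \<Rightarrow> ('b::finite) op"
  assumes lin: "is_linear_map \<Gamma>" and J: "psd (choi \<Gamma>)"
  shows "completely_positive \<Gamma>"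
  unfolding completely_positive_def using tensor_psd[OF lin J] by blast

lemma CP_choi:
  fixes \<Gamma> :: "('a::finite) op \<Rightarrow> ('b::finite) op"
  assumes cp: "completely_positive \<Gamma>"
  shows "psd (choi \<Gamma>)"
proof -
  define n where "n = CARD('a)"
  obtain g :: "'a \<Rightarrow> nat" where g: "bij_betw g UNIV {0..<n}"
    using ex_bij_betw_finite_nat[of "UNIV :: 'a set"] by (auto simp: n_def)
  define h where "h = inv g"
  have inj: "inj g" using g by (simp add: bij_betw_def)
  have hg: "h (g a) = a" for a by (simp add: h_def inv_f_f[OF inj])
  have gh: "c < n \<Longrightarrow> g (h c) = c" for c
    using g unfolding h_def bij_betw_def by (metis atLeast0LessThan f_inv_into_f lessThan_iff)
  have gn: "g a < n" for a using g unfolding bij_betw_def by auto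
  define X :: "(nat \<times> 'a) op" where "X = (\<lambda>(c, x) (c', x'). if g x = c \<and> g x' = c' then 1 else 0)"
  let ?S = "{..<n} \<times> (UNIV :: 'a set)"
  have sumS: "(\<Sum>p\<in>?S. if g (snd p) = fst p then f p else 0) = (\<Sum>a\<in>UNIV. f (g a, a))" for f :: "nat \<times> 'a \<Rightarrow> complex"
  proof -
    have "(\<Sum>p\<in>?S. if g (snd p) = fst p then f p else 0) = sum f {p\<in>?S. g (snd p) = fst p}"
      by (rule sum.inter_filter[symmetric]) simp
    also have "{p\<in>?S. g (snd p) = fst p} = (\<lambda>a. (g a, a)) ` UNIV" using gn by auto
    also have "sum f ((\<lambda>a. (g a, a)) ` UNIV) = (\<Sum>a\<in>UNIV. f (g a, a))"
      by (subst sum.reindex) (auto simp: inj_on_def)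
    finally show ?thesis .
  qed
  have Xpsd: "psd_on ?S X"
    unfolding psd_on_qf
  proof
    fix v :: "nat \<times> 'a \<Rightarrow> complex"
    have "qf ?S X v = (\<Sum>p\<in>?S. if g (snd p) = fst p then cnj (v p) else 0) * (\<Sum>q\<in>?S. if g (snd q) = fst q then v q else 0)"
      unfolding qf_def sum_product by (intro sum.cong refl) (auto simp: X_def)
    also have "\<dots> = cnj (\<Sum>a\<in>UNIV. v (g a, a)) * (\<Sum>a\<in>UNIV. v (g a, a))"
      unfolding sumS cnj_sum ..
    also have "\<dots> = of_real ((cmod (\<Sum>a\<in>UNIV. v (g a, a)))^2)"
      using complex_norm_square[of "\<Sum>a\<in>UNIV. v (g a, a)"] by (simp add: mult.commute)
    finally have "qf ?S X v = of_real ((cmod (\<Sum>a\<in>UNIV. v (g a, a)))^2)" .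
    then show "Im (qf ?S X v) = 0 \<and> 0 \<le> Re (qf ?S X v)" by simp
  qed
  have T: "psd_on ({..<n} \<times> UNIV) (id_tensor \<Gamma> X)" using cp Xpsd unfolding completely_positive_def by blast
  have idX: "id_tensor \<Gamma> X (c, b) (c', b') = choi \<Gamma> (h c, b) (h c', b')" if "c < n" "c' < n" for c c' b b'
  proof -
    have "(\<lambda>x x'. X (c, x) (c', x')) = Emat (h c) (h c')"
    proof (intro ext)
      fix x x'
      have e1: "(g x = c) = (x = h c)" using that hg gh by auto
      have e2: "(g x' = c') = (x' = h c')" using that hg gh by auto
      show "X (c, x) (c', x') = Emat (h c) (h c') x x'" unfolding X_def Emat_def by (simp add: e1 e2)
    qed
    then show ?thesis unfolding id_tensor_def choi_apply by simp
  qed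
  show ?thesis
    unfolding psd_def psd_on_qf
  proof
    fix w :: "'a \<times> 'b \<Rightarrow> complex"
    define v where "v = (\<lambda>(c, b). w (h c, b))"
    let ?S' = "{..<n} \<times> (UNIV :: 'b set)"
    have re: "(\<Sum>p\<in>UNIV. F p) = (\<Sum>p\<in>?S'. F (h (fst p), snd p))" for F :: "'a \<times> 'b \<Rightarrow> complex"
      by (rule sum.reindex_bij_witness[where j = "\<lambda>p. (g (fst p), snd p)" and i = "\<lambda>p. (h (fst p), snd p)"])
         (auto simp: hg gh gn)
    have "qf UNIV (choi \<Gamma>) w = qf ?S' (id_tensor \<Gamma> X) v"
      unfolding qf_def re[of "\<lambda>p. \<Sum>q\<in>UNIV. cnj (w p) * choi \<Gamma> p q * w q"]
    proof (rule sum.cong[OF refl])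
      fix p assume p: "p \<in> ?S'"
      show "(\<Sum>q\<in>UNIV. cnj (w (h (fst p), snd p)) * choi \<Gamma> (h (fst p), snd p) q * w q) =
        (\<Sum>q\<in>?S'. cnj (v p) * id_tensor \<Gamma> X p q * v q)"
        unfolding re[of "\<lambda>q. cnj (w (h (fst p), snd p)) * choi \<Gamma> (h (fst p), snd p) q * w q"]
      proof (rule sum.cong[OF refl])
        fix q assume q: "q \<in> ?S'"
        obtain c b where pc: "p = (c, b)" by fastforce
        obtain c' b' where qc: "q = (c', b')" by fastforce
        show "cnj (w (h (fst p), snd p)) * choi \<Gamma> (h (fst p), snd p) (h (fst q), snd q) * w (h (fst q), snd q) =
          cnj (v p) * id_tensor \<Gamma> X p q * v q"
          using p q unfolding pc qc by (simp add: v_def idX)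
      qed
    qed
    then show "Im (qf UNIV (choi \<Gamma>) w) = 0 \<and> 0 \<le> Re (qf UNIV (choi \<Gamma>) w)"
      using T unfolding psd_on_qf by simp
  qed
qed

lemma chan_choi_psd: "\<Gamma> \<in> channels \<Longrightarrow> psd (choi \<Gamma>)"
  unfolding channels_def by (auto intro: CP_choi)

lemma psd_UNIV_prod: "psd_on (UNIV \<times> UNIV) A = psd A"
  by (simp add: psd_def)

lemma chan_tensor_psd:
  fixes \<Gamma> :: "('a::finite) op \<Rightarrow> ('b::finite) op" and \<eta> :: "('c::finite \<times> 'a) op"
  assumes "\<Gamma> \<in> channels" "psd \<eta>"
  shows "psd (id_tensor \<Gamma> \<eta>)"
  using tensor_psd[of \<Gamma> "UNIV :: 'c set" \<eta>] assms chan_choi_psd[OF assms(1)]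
  unfolding psd_UNIV_prod by (simp add: channels_def)

lemma tr_mmult_psd:
  fixes A B :: "('a::finite) op"
  assumes "psd A" "psd B"
  shows "Re (tr (mmult A B)) \<ge> 0"
  using tr_psd[of UNIV A B] assms unfolding psd_def tr_def mmult_def by simp

lemma p_succ_nonneg:
  assumes "\<Gamma> \<in> channels" "T \<in> tasks"
  shows "p_succ \<Gamma> T \<ge> 0"
proof -
  obtain m p \<eta> M where T: "T = (m, p, \<eta>, M)" by (cases T) auto
  have h: "\<forall>i<m. 0 \<le> p i" "\<forall>i<m. is_state (\<eta> i)" "\<forall>i<m. psd (M i)"
    using assms(2) unfolding T tasks_def by auto
  show ?thesis unfolding T p_succ_def
    by (auto intro!: sum_nonneg mult_nonneg_nonneg tr_mmult_psd chan_tensor_psd[OF assms(1)]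
        simp: h[rule_format] is_state_def h(2)[rule_format, unfolded is_state_def])
qed

lemma p_succ_mix:
  fixes s :: real
  assumes "s \<ge> 0"
  shows "p_succ (\<lambda>X i j. (\<Lambda> X i j + of_real s * \<Theta> X i j) / of_real (1 + s)) T
     = (p_succ \<Lambda> T + s * p_succ \<Theta> T) / (1 + s)"
proof -
  obtain m p \<eta> M where T: "T = (m, p, \<eta>, M)" by (cases T) auto
  have it: "id_tensor (\<lambda>X i j. (\<Lambda> X i j + of_real s * \<Theta> X i j) / of_real (1 + s)) Y
      = (\<lambda>x y. (id_tensor \<Lambda> Y x y + of_real s * id_tensor \<Theta> Y x y) / of_real (1 + s))" for Y
    unfolding id_tensor_def by (auto intro!: ext)
  have tr: "Re (tr (mmult A (\<lambda>x y. (B x y + of_real s * C x y) / of_real (1 + s))))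
      = (Re (tr (mmult A B)) + s * Re (tr (mmult A C))) / (1 + s)" for A B C :: "('c::finite) op"
  proof -
    have "tr (mmult A (\<lambda>x y. (B x y + of_real s * C x y) / of_real (1 + s)))
        = (tr (mmult A B) + of_real s * tr (mmult A C)) / of_real (1 + s)"
      unfolding tr_def mmult_def
      by (simp add: sum_divide_distrib sum_distrib_left sum.distrib algebra_simps add_divide_distrib)
    then show ?thesis using assms by (simp add: Re_divide_of_real)
  qed
  show ?thesis unfolding T p_succ_def it tr
    using assms by (simp add: sum_divide_distrib sum_distrib_left sum.distrib algebra_simps add_divide_distrib)
qed

lemma tr_choi:
  fixes \<Gamma> :: "('a::finite) op \<Rightarrow> ('b::finite) op"
  assumes "trace_preserving \<Gamma>"
  shows "tr (choi \<Gamma>) = of_nat CARD('a)"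
proof -
  have "tr (choi \<Gamma>) = (\<Sum>a\<in>UNIV. \<Sum>b\<in>UNIV. choi \<Gamma> (a, b) (a, b))"
    unfolding tr_def by (simp add: UNIV_Times_UNIV[symmetric] sum.cartesian_product del: UNIV_Times_UNIV)
  also have "\<dots> = (\<Sum>a\<in>UNIV. tr (\<Gamma> (Emat a a)))"
    by (simp add: tr_def choi_apply)
  also have "\<dots> = (\<Sum>a\<in>(UNIV::'a set). tr (Emat a a))"
    using assms by (simp add: trace_preserving_def)
  also have "\<dots> = (\<Sum>a\<in>(UNIV::'a set). 1)"
    unfolding tr_def Emat_def by simp
  finally show ?thesis by simp
qed

definition tov :: "('i::finite) op \<Rightarrow> complex^('i \<times> 'i)" where
  "tov A = (\<chi> p. A (fst p) (snd p))"

definition fromv :: "complex^('i::finite \<times> 'i) \<Rightarrow> 'i op" where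
  "fromv x = (\<lambda>i j. x $ (i, j))"

lemma fromv_tov[simp]: "fromv (tov A) = A"
  unfolding fromv_def tov_def by simp

lemma herm_qf_real:
  assumes "\<forall>i j. A j i = cnj (A i j)"
  shows "Im (qf UNIV A v) = 0"
proof -
  have "cnj (qf UNIV A v) = (\<Sum>i\<in>UNIV. \<Sum>j\<in>UNIV. v i * A j i * cnj (v j))"
    unfolding qf_def cnj_sum
  proof (rule sum.cong[OF refl], rule sum.cong[OF refl])
    fix i j
    have "cnj (A i j) = A j i" using assms by (metis complex_cnj_cnj)
    then show "cnj (cnj (v i) * A i j * v j) = v i * A j i * cnj (v j)" by simp
  qed
  also have "\<dots> = (\<Sum>j\<in>UNIV. \<Sum>i\<in>UNIV. v i * A j i * cnj (v j))"
    by (rule sum.swap)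
  also have "\<dots> = qf UNIV A v"
    unfolding qf_def by (rule sum.cong[OF refl], rule sum.cong[OF refl]) (simp add: mult_ac)
  finally have e: "cnj (qf UNIV A v) = qf UNIV A v" .
  have "Im (cnj (qf UNIV A v)) = Im (qf UNIV A v)" by (simp only: e)
  then show ?thesis by simp
qed

lemma qf_comb: "qf S (\<lambda>i j. a * A i j + b * B i j) v = a * qf S A v + b * qf S B v"
  unfolding qf_def by (simp add: sum.distrib sum_distrib_left algebra_simps)

lemma psd_comb:
  assumes "psd_on S A" "psd_on S B" "a \<ge> 0" "b \<ge> 0"
  shows "psd_on S (\<lambda>i j. of_real a * A i j + of_real b * B i j)"
  using assms unfolding psd_on_qf qf_comb by simp

lemma psd_offdiag:
  fixes A :: "('i::finite) op"
  assumes "psd A"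
  shows "(cmod (A p q))^2 \<le> Re (A p p) * Re (A q q)"
proof (cases "A p p = 0")
  case True
  then show ?thesis using psd_zero_row[of UNIV A p q] assms unfolding psd_def by simp
next
  case False
  have S: "psd (\<lambda>x y. A x y - A x p * A p y / A p p)"
    using psd_schur[of UNIV A p] assms False unfolding psd_def by simp
  have d: "Re (A q q - A q p * A p q / A p p) \<ge> 0"
    using psd_diag(2)[OF S[unfolded psd_def] UNIV_I finite_class.finite_UNIV] .
  have h: "A q p = cnj (A p q)" using psd_herm[of UNIV A p q] assms unfolding psd_def by simp
  have pd: "Im (A p p) = 0" "Re (A p p) \<ge> 0"
    using psd_diag[OF assms[unfolded psd_def] UNIV_I finite_class.finite_UNIV] by auto
  define r where "r = Re (A p p)"
  have r: "A p p = of_real r" "r > 0"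
    using pd False by (auto simp: r_def complex_eq_iff)
  have "A q p * A p q = of_real ((cmod (A p q))^2)"
    unfolding h using complex_norm_square[of "A p q"] by (simp add: mult.commute)
  then have e2: "A q p * A p q / A p p = of_real ((cmod (A p q))^2 / r)" using r by simp
  have "Re (A q q) - (cmod (A p q))^2 / r \<ge> 0" using d(1) unfolding e2 by simp
  then show ?thesis using r by (simp add: field_simps)
qed

lemma psd_diag_le_tr:
  fixes A :: "('i::finite) op"
  assumes "psd A"
  shows "Re (A p p) \<le> Re (tr A)"
proof -
  have "Re (tr A) = (\<Sum>i\<in>UNIV. Re (A i i))" by (simp add: tr_def)
  also have "\<dots> \<ge> Re (A p p)"
    by (rule member_le_sum) (use psd_diag[of UNIV A] assms in \<open>auto simp: psd_def\<close>)
  finally show ?thesis .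
qed

lemma chan_choi_bound:
  fixes \<Gamma> :: "('a::finite) op \<Rightarrow> ('b::finite) op"
  assumes "\<Gamma> \<in> channels"
  shows "cmod (choi \<Gamma> p q) \<le> real CARD('a)"
proof -
  let ?J = "choi \<Gamma>"
  have J: "psd ?J" by (rule chan_choi_psd[OF assms])
  have trJ: "Re (tr ?J) = real CARD('a)" using tr_choi[of \<Gamma>] assms by (simp add: channels_def)
  have "(cmod (?J p q))^2 \<le> Re (?J p p) * Re (?J q q)" by (rule psd_offdiag[OF J])
  also have "\<dots> \<le> real CARD('a) * real CARD('a)"
    using psd_diag_le_tr[OF J, of p] psd_diag_le_tr[OF J, of q] psd_diag(2)[of UNIV ?J] J trJ
    unfolding psd_def by (intro mult_mono) auto
  finally have "(cmod (?J p q))^2 \<le> (real CARD('a))^2" by (simp add: power2_eq_square)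
  then show ?thesis by (rule power2_le_imp_le) simp
qed

definition phin :: "('a::finite \<times> 'a) op" where
  "phin = (\<lambda>x y. phi x y / of_nat CARD('a))"

lemma phi_psd: "psd (phi :: ('a::finite \<times> 'a) op)"
  unfolding psd_def psd_on_qf
proof
  fix v :: "'a \<times> 'a \<Rightarrow> complex"
  have "qf UNIV phi v = (\<Sum>p\<in>UNIV. if fst p = snd p then cnj (v p) else 0) * (\<Sum>q\<in>UNIV. if fst q = snd q then v q else 0)"
    unfolding qf_def sum_product by (intro sum.cong refl) (auto simp: phi_def)
  also have "\<dots> = cnj (\<Sum>q\<in>UNIV. if fst q = snd q then v q else 0) * (\<Sum>q\<in>UNIV. if fst q = snd q then v q else 0)"
    unfolding cnj_sum by (simp add: if_distrib cong: if_cong)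
  also have "\<dots> = of_real ((cmod (\<Sum>q\<in>UNIV. if fst q = snd q then v q else 0))^2)"
    using complex_norm_square[of "\<Sum>q\<in>UNIV. if fst q = snd q then v q else 0"] by (simp add: mult.commute)
  finally show "Im (qf UNIV phi v) = 0 \<and> 0 \<le> Re (qf UNIV phi v)" by simp
qed

lemma tr_phi: "tr (phi :: ('a::finite \<times> 'a) op) = of_nat CARD('a)"
proof -
  have "tr (phi :: ('a \<times> 'a) op) = (\<Sum>p\<in>(UNIV :: ('a \<times> 'a) set). if fst p = snd p then 1 else 0)"
    unfolding tr_def phi_def by (intro sum.cong refl) (auto split: prod.splits)
  also have "\<dots> = of_nat (card {p :: 'a \<times> 'a. fst p = snd p})"
    by (simp add: sum.If_cases)
  also have "{p :: 'a \<times> 'a. fst p = snd p} = (\<lambda>a. (a, a)) ` UNIV" by auto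
  also have "card ((\<lambda>a::'a. (a, a)) ` UNIV) = CARD('a)" by (rule card_image) (auto simp: inj_on_def)
  finally show ?thesis .
qed

lemma phin_state: "is_state (phin :: ('a::finite \<times> 'a) op)"
proof -
  have d: "(of_nat CARD('a) :: complex) \<noteq> 0" by simp
  have "psd (\<lambda>x y. of_real (1 / real CARD('a)) * (phi :: ('a \<times> 'a) op) x y + of_real 0 * phi x y)"
    unfolding psd_def by (rule psd_comb) (use phi_psd in \<open>auto simp: psd_def\<close>)
  moreover have "tr (phin :: ('a \<times> 'a) op) = 1"
    using tr_phi[where 'a='a] d unfolding phin_def tr_def by (simp add: sum_divide_distrib[symmetric])
  ultimately show ?thesis unfolding is_state_def phin_def by (simp add: divide_inverse mult.commute)
qed

lemma id_tensor_phin: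
  fixes \<Gamma> :: "('a::finite) op \<Rightarrow> ('b::finite) op"
  assumes lin: "is_linear_map \<Gamma>"
  shows "id_tensor \<Gamma> phin = (\<lambda>x y. choi \<Gamma> x y / of_nat CARD('a))"
proof (intro ext)
  fix x y :: "'a \<times> 'b"
  obtain c b where x: "x = (c, b)" by fastforce
  obtain c' b' where y: "y = (c', b')" by fastforce
  have e: "(\<lambda>a a'. phin (c, a) (c', a')) = (\<lambda>a a'. (1 / of_nat CARD('a)) * phi (c, a) (c', a'))"
    unfolding phin_def by simp
  have "id_tensor \<Gamma> phin x y = \<Gamma> (\<lambda>a a'. phin (c, a) (c', a')) b b'"
    unfolding x y id_tensor_def by simp
  also have "\<dots> = \<Gamma> (\<lambda>a a'. (1 / of_nat CARD('a)) * phi (c, a) (c', a')) b b'"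
    by (simp only: e)
  also have "\<dots> = (1 / of_nat CARD('a)) * \<Gamma> (\<lambda>a a'. phi (c, a) (c', a')) b b'"
    by (simp only: lin_scale[OF lin])
  also have "\<dots> = choi \<Gamma> x y / of_nat CARD('a)"
    unfolding x y choi_def id_tensor_def by simp
  finally show "id_tensor \<Gamma> phin x y = choi \<Gamma> x y / of_nat CARD('a)" .
qed

lemma inner_tov:
  fixes W :: "complex^('i::finite \<times> 'i)"
  shows "inner W (tov A) = (\<Sum>i\<in>UNIV. \<Sum>j\<in>UNIV. inner (W $ (i, j)) (A i j))"
  unfolding inner_vec_def tov_def
  by (simp add: UNIV_Times_UNIV[symmetric] sum.cartesian_product case_prod_beta del: UNIV_Times_UNIV)

definition hermW :: "complex^('i::finite \<times> 'i) \<Rightarrow> 'i op" where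
  "hermW W = (\<lambda>i j. (cnj (W $ (j, i)) + W $ (i, j)) / 2)"

lemma hermW_inner:
  fixes W :: "complex^('i::finite \<times> 'i)"
  assumes h: "\<And>i j. A j i = cnj (A i j)"
  shows "Re (\<Sum>i\<in>UNIV. \<Sum>j\<in>UNIV. hermW W i j * A j i) = inner W (tov A)"
proof -
  have t: "Re (hermW W i j * A j i) = (inner (W $ (j, i)) (A j i) + inner (W $ (i, j)) (A i j)) / 2" for i j
    unfolding hermW_def h[of i j] by (simp add: inner_complex_def algebra_simps)
  have "Re (\<Sum>i\<in>UNIV. \<Sum>j\<in>UNIV. hermW W i j * A j i) =
      ((\<Sum>i\<in>UNIV. \<Sum>j\<in>UNIV. inner (W $ (j, i)) (A j i)) + (\<Sum>i\<in>UNIV. \<Sum>j\<in>UNIV. inner (W $ (i, j)) (A i j))) / 2"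
    unfolding Re_sum t by (simp add: sum.distrib add_divide_distrib sum_divide_distrib)
  also have "(\<Sum>i\<in>UNIV. \<Sum>j\<in>UNIV. inner (W $ (j, i)) (A j i)) = (\<Sum>i\<in>UNIV. \<Sum>j\<in>UNIV. inner (W $ (i, j)) (A i j))"
    by (rule sum.swap)
  finally show ?thesis unfolding inner_tov by simp
qed

lemma hermW_herm: "hermW W j i = cnj (hermW W i j)"
  unfolding hermW_def by (simp add: add.commute)

lemma hermW_psd:
  fixes W :: "complex^('i::finite \<times> 'i)"
  assumes dual: "\<forall>x. psd (fromv x) \<longrightarrow> inner W x \<ge> 0"
  shows "psd (hermW W)"
  unfolding psd_def psd_on_qf
proof
  fix v :: "'i \<Rightarrow> complex"
  define P where "P = (\<lambda>a b. v a * cnj (v b))"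
  have Ph: "P j i = cnj (P i j)" for i j by (simp add: P_def)
  have Ppsd: "psd P"
    unfolding psd_def psd_on_qf
  proof
    fix w :: "'i \<Rightarrow> complex"
    have "qf UNIV P w = (\<Sum>a\<in>UNIV. cnj (w a) * v a) * (\<Sum>b\<in>UNIV. cnj (v b) * w b)"
      unfolding qf_def P_def sum_product by (simp add: mult_ac)
    also have "\<dots> = of_real ((cmod (\<Sum>a\<in>UNIV. cnj (w a) * v a))^2)"
      using complex_norm_square[of "\<Sum>a\<in>UNIV. cnj (w a) * v a"] by (simp add: cnj_sum mult.commute)
    finally show "Im (qf UNIV P w) = 0 \<and> 0 \<le> Re (qf UNIV P w)" by simp
  qed
  have "Re (qf UNIV (hermW W) v) = Re (\<Sum>i\<in>UNIV. \<Sum>j\<in>UNIV. hermW W i j * P j i)"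
    unfolding qf_def P_def by (simp add: mult_ac)
  also have "\<dots> = inner W (tov P)" by (rule hermW_inner[OF Ph])
  also have "\<dots> \<ge> 0" using dual Ppsd by simp
  finally show "Im (qf UNIV (hermW W) v) = 0 \<and> 0 \<le> Re (qf UNIV (hermW W) v)"
    using herm_qf_real[of "hermW W" v] hermW_herm by auto
qed

lemma aux_avg: fixes a b c N :: real
  shows "a \<le> N \<Longrightarrow> b \<le> N \<Longrightarrow> c \<le> (a + b) / 2 \<Longrightarrow> c \<le> N"
  by (simp add: field_simps)

lemma qf_bound:
  fixes H :: "('i::finite) op"
  shows "Re (qf UNIV H v) \<le> (\<Sum>i\<in>UNIV. \<Sum>j\<in>UNIV. cmod (H i j)) * (\<Sum>k\<in>UNIV. (cmod (v k))^2)"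
proof -
  let ?N = "\<Sum>k\<in>UNIV. (cmod (v k))^2"
  have vv: "cmod (v i) * cmod (v j) \<le> ?N" for i j
  proof -
    have "(cmod (v i))^2 \<le> ?N" "(cmod (v j))^2 \<le> ?N" by (auto intro: member_le_sum)
    moreover have "cmod (v i) * cmod (v j) \<le> ((cmod (v i))^2 + (cmod (v j))^2) / 2"
      using sum_squares_bound[of "cmod (v i)" "cmod (v j)"] by (simp add: power2_eq_square field_simps)
    ultimately show ?thesis by (rule aux_avg)
  qed
  have "Re (qf UNIV H v) \<le> cmod (qf UNIV H v)" by (rule complex_Re_le_cmod)
  also have "\<dots> \<le> (\<Sum>i\<in>UNIV. \<Sum>j\<in>UNIV. cmod (cnj (v i) * H i j * v j))"
    unfolding qf_def by (rule order_trans[OF norm_sum sum_mono]) (rule norm_sum)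
  also have "\<dots> \<le> (\<Sum>i\<in>UNIV. \<Sum>j\<in>UNIV. cmod (H i j) * ?N)"
  proof (intro sum_mono)
    fix i j
    have "cmod (cnj (v i) * H i j * v j) = cmod (H i j) * (cmod (v i) * cmod (v j))"
      by (simp add: norm_mult)
    also have "\<dots> \<le> cmod (H i j) * ?N" by (rule mult_left_mono[OF vv]) simp
    finally show "cmod (cnj (v i) * H i j * v j) \<le> cmod (H i j) * ?N" .
  qed
  also have "\<dots> = (\<Sum>i\<in>UNIV. \<Sum>j\<in>UNIV. cmod (H i j)) * ?N"
    by (simp add: sum_distrib_right)
  finally show ?thesis .
qed


lemma psd_hermitian: "psd (A :: ('i::finite) op) \<Longrightarrow> A j i = cnj (A i j)"
  using psd_herm[of UNIV A i j] unfolding psd_def by simp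

lemma task_from_W:
  fixes W :: "complex^(('a::finite \<times> 'b::finite) \<times> ('a \<times> 'b))"
  assumes dual: "\<forall>x. psd (fromv x) \<longrightarrow> inner W x \<ge> 0"
  shows "\<exists>T\<in>tasks. \<exists>\<kappa>>0. \<forall>\<Gamma>::'a op \<Rightarrow> 'b op. \<Gamma> \<in> channels \<longrightarrow> p_succ \<Gamma> T = \<kappa> * inner W (tov (choi \<Gamma>))"
proof -
  define H where "H = hermW W"
  have Hpsd: "psd H" unfolding H_def by (rule hermW_psd[OF dual])
  have Hh: "H j i = cnj (H i j)" for i j unfolding H_def by (rule hermW_herm)
  define c where "c = 1 + (\<Sum>i\<in>UNIV. \<Sum>j\<in>UNIV. cmod (H i j))"
  have c1: "c \<ge> 1" unfolding c_def by (simp add: sum_nonneg)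
  define M0 where "M0 = (\<lambda>i j. H i j / of_real c)"
  define M1 where "M1 = (\<lambda>i j. idop i j - H i j / of_real c)"
  have M0psd: "psd M0"
  proof -
    have "psd_on UNIV (\<lambda>i j. of_real (1 / c) * H i j + of_real 0 * H i j)"
      by (rule psd_comb) (use Hpsd c1 in \<open>auto simp: psd_def\<close>)
    moreover have "(\<lambda>i j. of_real (1 / c) * H i j + of_real 0 * H i j) = M0"
      unfolding M0_def by (auto intro!: ext simp: divide_inverse mult.commute)
    ultimately show ?thesis unfolding psd_def by simp
  qed
  have M1psd: "psd M1"
    unfolding psd_def psd_on_qf
  proof
    fix v :: "'a \<times> 'b \<Rightarrow> complex"
    define N where "N = (\<Sum>k\<in>UNIV. (cmod (v k))^2)"
    have qid: "qf UNIV idop v = of_real N"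
    proof -
      have "qf UNIV idop v = (\<Sum>i\<in>UNIV. \<Sum>j\<in>UNIV. if i = j then cnj (v i) * v j else 0)"
        unfolding qf_def idop_def by (intro sum.cong refl) auto
      also have "\<dots> = (\<Sum>i\<in>UNIV. cnj (v i) * v i)" by simp
      also have "\<dots> = (\<Sum>i\<in>UNIV. of_real ((cmod (v i))^2))"
        by (intro sum.cong refl) (metis complex_norm_square mult.commute)
      finally show ?thesis by (simp add: N_def)
    qed
    have "qf UNIV M1 v = qf UNIV idop v - qf UNIV H v / of_real c"
      unfolding qf_def M1_def by (simp add: algebra_simps sum_subtractf sum_divide_distrib)
    then have e: "qf UNIV M1 v = of_real N - qf UNIV H v / of_real c" using qid by simp
    have imH: "Im (qf UNIV H v) = 0" by (rule herm_qf_real) (intro allI Hh)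
    have b: "Re (qf UNIV H v) \<le> (c - 1) * N"
      using qf_bound[of H v] unfolding c_def N_def by simp
    have N0: "N \<ge> 0" unfolding N_def by (simp add: sum_nonneg)
    have "Re (qf UNIV H v) / c \<le> N"
    proof -
      have "(c - 1) * N \<le> c * N" using N0 by (simp add: algebra_simps)
      then show ?thesis using b c1 by (simp add: divide_le_eq mult.commute)
    qed
    then show "Im (qf UNIV M1 v) = 0 \<and> 0 \<le> Re (qf UNIV M1 v)"
      unfolding e using imH by (simp add: Re_divide_of_real Im_divide_of_real)
  qed
  define T0 where "T0 = (2::nat, (\<lambda>i::nat. if i = 0 then (1::real) else 0), (\<lambda>i::nat. phin :: ('a \<times> 'a) op),
      (\<lambda>i::nat. if i = 0 then M0 else M1))"
  have s2: "{..<2::nat} = {0, 1}" by auto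
  have sumM: "(\<lambda>x y. \<Sum>i\<in>{0, 1::nat}. (if i = 0 then M0 else M1) x y) = idop"
    by (intro ext) (simp add: M0_def M1_def)
  have T0: "T0 \<in> tasks"
    unfolding T0_def tasks_def s2 mem_Collect_eq prod.case
  proof (intro conjI)
    show "\<forall>i<2::nat. (0::real) \<le> (if i = 0 then 1 else 0)" by simp
    show "(\<Sum>i\<in>{0, 1::nat}. if i = 0 then (1::real) else 0) = 1" by simp
    show "\<forall>i<2::nat. is_state (phin :: ('a \<times> 'a) op)" using phin_state by blast
    show "\<forall>i<2::nat. psd (if i = 0 then M0 else M1)" using M0psd M1psd by simp
    show "(\<lambda>x y. \<Sum>i\<in>{0, 1::nat}. (if i = 0 then M0 else M1) x y) = idop" by (rule sumM)
  qed
  define \<kappa> where "\<kappa> = 1 / (c * real CARD('a))"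
  have kpos: "\<kappa> > 0" using c1 unfolding \<kappa>_def by simp
  have "p_succ \<Gamma> T0 = \<kappa> * inner W (tov (choi \<Gamma>))" if G: "\<Gamma> \<in> channels" for \<Gamma> :: "'a op \<Rightarrow> 'b op"
  proof -
    have lin: "is_linear_map \<Gamma>" using G by (simp add: channels_def)
    have J: "psd (choi \<Gamma>)" by (rule chan_choi_psd[OF G])
    have "p_succ \<Gamma> T0 = Re (tr (mmult M0 (id_tensor \<Gamma> phin)))"
      unfolding T0_def p_succ_def by (simp add: numeral_2_eq_2 lessThan_Suc)
    also have "tr (mmult M0 (id_tensor \<Gamma> phin)) =
        (\<Sum>i\<in>UNIV. \<Sum>k\<in>UNIV. H i k * choi \<Gamma> k i) / (of_real c * of_nat CARD('a))"
      unfolding id_tensor_phin[OF lin] tr_def mmult_def M0_def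
      by (simp add: sum_divide_distrib)
    also have "Re \<dots> = Re (\<Sum>i\<in>UNIV. \<Sum>k\<in>UNIV. H i k * choi \<Gamma> k i) / (c * real CARD('a))"
    proof -
      have "(of_real c * of_nat CARD('a) :: complex) = of_real (c * real CARD('a))" by simp
      then show ?thesis by (simp only: Re_divide_of_real)
    qed
    also have "Re (\<Sum>i\<in>UNIV. \<Sum>k\<in>UNIV. H i k * choi \<Gamma> k i) = inner W (tov (choi \<Gamma>))"
      unfolding H_def by (rule hermW_inner) (rule psd_hermitian[OF J])
    finally show ?thesis by (simp add: \<kappa>_def)
  qed
  then show ?thesis using T0 kpos by blast
qed

definition Pset :: "(complex^('i::finite \<times> 'i)) set" where
  "Pset = {x. psd (fromv x)}"

lemma cont_qf: "continuous_on UNIV (\<lambda>x :: complex^('i::finite \<times> 'i). qf UNIV (fromv x) w)"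
proof -
  have c: "continuous_on UNIV (\<lambda>x :: complex^('i \<times> 'i). x $ p)" for p
    by (rule linear_continuous_on) (rule bounded_linear_vec_nth)
  show ?thesis unfolding qf_def fromv_def
    by (intro continuous_intros c)
qed

lemma closed_Pset: "closed (Pset :: (complex^('i::finite \<times> 'i)) set)"
proof -
  have "Pset = (\<Inter>w. {x :: complex^('i \<times> 'i). Im (qf UNIV (fromv x) w) = 0} \<inter> {x. 0 \<le> Re (qf UNIV (fromv x) w)})"
    unfolding Pset_def psd_def psd_on_qf by auto
  also have "closed \<dots>"
    by (intro closed_INT ballI closed_Int closed_Collect_eq closed_Collect_le continuous_intros
        continuous_on_compose2[OF continuous_on_Im cont_qf] continuous_on_compose2[OF continuous_on_Re cont_qf]) auto
  finally show ?thesis .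
qed

lemma fromv_comb: "fromv (u *\<^sub>R x + v *\<^sub>R y) = (\<lambda>i j. of_real u * fromv x i j + of_real v * fromv y i j)"
  unfolding fromv_def by (intro ext, simp only: vector_add_component vector_scaleR_component) (simp add: scaleR_conv_of_real)

lemma Pset_comb:
  assumes "x \<in> Pset" "y \<in> Pset" "u \<ge> 0" "v \<ge> 0" shows "u *\<^sub>R x + v *\<^sub>R y \<in> Pset"
proof -
  have "psd (fromv (u *\<^sub>R x + v *\<^sub>R y))"
    unfolding fromv_comb psd_def by (rule psd_comb) (use assms in \<open>auto simp: Pset_def psd_def\<close>)
  then show ?thesis by (simp add: Pset_def)
qed

lemma convex_Pset: "convex Pset"
  unfolding convex_def using Pset_comb by blast

lemma zero_Pset: "0 \<in> Pset"
  unfolding Pset_def psd_def psd_on_qf qf_def fromv_def by simp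

lemma Pset_scale: "x \<in> Pset \<Longrightarrow> u \<ge> 0 \<Longrightarrow> u *\<^sub>R x \<in> Pset"
  using Pset_comb[of x 0 u 0] zero_Pset by simp

lemma tov_comb: "tov (\<lambda>i j. of_real u * A i j + of_real v * B i j) = u *\<^sub>R tov A + v *\<^sub>R tov B"
  unfolding tov_def by (simp only: vec_eq_iff vector_add_component vector_scaleR_component vec_lambda_beta) (simp add: scaleR_conv_of_real)

lemma choi_comb:
  "choi (\<lambda>X i j. of_real u * \<Xi>1 X i j + of_real v * \<Xi>2 X i j) = (\<lambda>p q. of_real u * choi \<Xi>1 p q + of_real v * choi \<Xi>2 p q)"
  by (intro ext) (auto simp: choi_apply split: prod.splits)

lemma norm_tov_bound:
  fixes A :: "('i::finite) op"
  assumes "\<And>p q. cmod (A p q) \<le> B"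
  shows "norm (tov A) \<le> real CARD('i \<times> 'i) * B"
proof -
  have "norm (tov A) = L2_set (\<lambda>p. norm (tov A $ p)) UNIV" by (simp add: norm_vec_def)
  also have "\<dots> \<le> (\<Sum>p\<in>UNIV. norm (tov A $ p))" by (rule L2_set_le_sum) simp
  also have "\<dots> \<le> (\<Sum>p\<in>(UNIV :: ('i \<times> 'i) set). B)"
    by (intro sum_mono) (simp add: tov_def assms)
  finally show ?thesis by simp
qed

lemma tr_lin_comb: "tr (\<lambda>i j. a * A i j + b * B i j) = a * tr A + b * tr B"
  unfolding tr_def by (simp add: sum.distrib sum_distrib_left)

lemma make_channel:
  fixes \<Xi> \<Lambda> :: "('a::finite) op \<Rightarrow> ('b::finite) op"
  assumes X: "\<Xi> \<in> channels" and L: "\<Lambda> \<in> channels" and t2: "t2 > 1"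
    and P: "psd (\<lambda>p q. of_real t2 * choi \<Xi> p q - choi \<Lambda> p q)"
  defines "s \<equiv> t2 - 1"
  defines "\<Theta> \<equiv> (\<lambda>X i j. (of_real t2 * \<Xi> X i j - \<Lambda> X i j) / of_real s)"
  shows "\<Theta> \<in> channels" "(\<lambda>X i j. (\<Lambda> X i j + of_real s * \<Theta> X i j) / of_real (1 + s)) = \<Xi>"
proof -
  have s0: "s > 0" using t2 by (simp add: s_def)
  have linX: "is_linear_map \<Xi>" and linL: "is_linear_map \<Lambda>" using X L by (auto simp: channels_def)
  have tpX: "trace_preserving \<Xi>" and tpL: "trace_preserving \<Lambda>" using X L by (auto simp: channels_def)
  have lin: "is_linear_map \<Theta>"
    unfolding is_linear_map_def
  proof (intro allI)
    fix X Y and c :: complex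
    have e1: "\<Xi> (\<lambda>i j. c * X i j + Y i j) = (\<lambda>i j. c * \<Xi> X i j + \<Xi> Y i j)" by (rule lin_comb[OF linX])
    have e2: "\<Lambda> (\<lambda>i j. c * X i j + Y i j) = (\<lambda>i j. c * \<Lambda> X i j + \<Lambda> Y i j)" by (rule lin_comb[OF linL])
    show "\<Theta> (\<lambda>i j. c * X i j + Y i j) = (\<lambda>i j. c * \<Theta> X i j + \<Theta> Y i j)"
      unfolding \<Theta>_def e1 e2 using s0 by (intro ext) (simp add: field_simps)
  qed
  have tp: "trace_preserving \<Theta>"
    unfolding trace_preserving_def
  proof
    fix X
    have "tr (\<Theta> X) = (of_real t2 * tr (\<Xi> X) - tr (\<Lambda> X)) / of_real s"
      unfolding \<Theta>_def tr_def by (simp add: sum_divide_distrib[symmetric] sum_subtractf sum_distrib_left)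
    also have "\<dots> = (of_real t2 - 1) * tr X / of_real s"
      using tpX tpL by (simp add: trace_preserving_def algebra_simps)
    also have "\<dots> = tr X" using s0 by (simp add: s_def)
    finally show "tr (\<Theta> X) = tr X" .
  qed
  have cj: "choi \<Theta> = (\<lambda>p q. of_real (1 / s) * (of_real t2 * choi \<Xi> p q - choi \<Lambda> p q) + of_real 0 * choi \<Xi> p q)"
    unfolding \<Theta>_def by (intro ext) (auto simp: choi_apply split: prod.splits)
  have "psd (choi \<Theta>)"
    unfolding cj psd_def by (rule psd_comb) (use P s0 chan_choi_psd[OF X] in \<open>auto simp: psd_def\<close>)
  then have cp: "completely_positive \<Theta>" by (rule choi_CP[OF lin])
  show "\<Theta> \<in> channels" using lin tp cp by (simp add: channels_def)
  show "(\<lambda>X i j. (\<Lambda> X i j + of_real s * \<Theta> X i j) / of_real (1 + s)) = \<Xi>"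
    using s0 t2 by (intro ext) (simp add: \<Theta>_def s_def field_simps)
qed


lemma coef_aux:
  fixes x y :: complex and c \<mu> t2 :: real
  assumes "c \<noteq> 0"
  shows "of_real (1/c) * (of_real \<mu> * x - of_real c * y) + of_real (t2 - \<mu>/c) * x = of_real t2 * x - y"
proof -
  have "of_real (1/c) * (of_real \<mu> * x - of_real c * y) = of_real (\<mu>/c) * x - of_real (c / c) * y"
    by (simp add: algebra_simps divide_inverse)
  also have "of_real (c / c) = (1::complex)" using assms by simp
  finally show ?thesis by (simp add: algebra_simps of_real_diff)
qed

lemma Q_elem:
  fixes K :: "'v::real_vector set"
  assumes "convex K" "K \<noteq> {}" "x \<in> convex hull (insert 0 ((\<lambda>x. t *\<^sub>R x) ` K))"
  shows "\<exists>v k. 0 \<le> v \<and> v \<le> 1 \<and> k \<in> K \<and> x = (v * t) *\<^sub>R k"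
proof -
  have cK: "convex ((\<lambda>x. t *\<^sub>R x) ` K)" by (rule convex_scaling[OF assms(1)])
  have ne: "(\<lambda>x. t *\<^sub>R x) ` K \<noteq> {}" using assms(2) by simp
  obtain u v b where uvb: "u \<ge> 0" "v \<ge> 0" "u + v = 1" "b \<in> (\<lambda>x. t *\<^sub>R x) ` K" "x = u *\<^sub>R 0 + v *\<^sub>R b"
    using assms(3) unfolding convex_hull_insert[OF ne] convex_hull_eq[THEN iffD2, OF cK] by blast
  then obtain k where "k \<in> K" "b = t *\<^sub>R k" by blast
  then show ?thesis using uvb by (intro exI[of _ v] exI[of _ k]) auto
qed

lemma convex_chans_image:
  fixes F :: "(('a::finite) op \<Rightarrow> ('b::finite) op) set"
  assumes "convex_chans F"
  shows "convex ((\<lambda>\<Xi>. tov (choi \<Xi>)) ` F)"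
  unfolding convex_def
proof (intro ballI allI impI)
  fix x y and u v :: real
  assume x: "x \<in> (\<lambda>\<Xi>. tov (choi \<Xi>)) ` F" and y: "y \<in> (\<lambda>\<Xi>. tov (choi \<Xi>)) ` F"
    and u0: "0 \<le> u" and v0: "0 \<le> v" and uv1: "u + v = 1"
  have uv: "0 \<le> u \<and> 0 \<le> v \<and> u + v = 1" using u0 v0 uv1 by simp
  obtain X1 where X1: "X1 \<in> F" "x = tov (choi X1)" using x by blast
  obtain X2 where X2: "X2 \<in> F" "y = tov (choi X2)" using y by blast
  have v: "v = 1 - u" using uv by simp
  have m: "(\<lambda>X i j. of_real u * X1 X i j + of_real (1 - u) * X2 X i j) \<in> F"
    using assms X1 X2 uv unfolding convex_chans_def by auto
  have "u *\<^sub>R x + v *\<^sub>R y = tov (choi (\<lambda>X i j. of_real u * X1 X i j + of_real (1 - u) * X2 X i j))"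
    unfolding choi_comb tov_comb X1 X2 v ..
  then show "u *\<^sub>R x + v *\<^sub>R y \<in> (\<lambda>\<Xi>. tov (choi \<Xi>)) ` F" using m by blast
qed

lemma tr_psd_nonneg: "psd (A :: ('i::finite) op) \<Longrightarrow> Re (tr A) \<ge> 0"
  unfolding tr_def using psd_diag(2)[of UNIV A] by (auto simp: psd_def intro: sum_nonneg)

lemma hard:
  fixes F :: "(('a::finite) op \<Rightarrow> ('b::finite) op) set" and \<Lambda> :: "'a op \<Rightarrow> 'b op" and R :: ereal
  assumes Fch: "F \<subseteq> channels" and Fne: "F \<noteq> {}" and conv: "convex_chans F" and L: "\<Lambda> \<in> channels"
    and tpos: "t > 0" and tR: "ereal t < 1 + R"
    and nonadm: "\<And>s \<Theta> \<Xi>. s > 0 \<Longrightarrow> \<Theta> \<in> channels \<Longrightarrow> \<Xi> \<in> F \<Longrightarrow>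
        (\<lambda>X i j. (\<Lambda> X i j + of_real s * \<Theta> X i j) / of_real (1 + s)) = \<Xi> \<Longrightarrow> R \<le> ereal s"
  shows "\<exists>T\<in>tasks. p_succ \<Lambda> T > 0 \<and> (\<forall>\<Xi>\<in>F. 0 \<le> p_succ \<Xi> T \<and> t * p_succ \<Xi> T < p_succ \<Lambda> T)"
proof -
  obtain z1 where z1: "ereal t < z1" "z1 < 1 + R" using dense[OF tR] by blast
  obtain z2 where z2: "z1 < z2" "z2 < 1 + R" using dense[OF z1(2)] by blast
  obtain t1 where t1: "z1 = ereal t1" using z1 by (cases z1) auto
  obtain t2 where t2: "z2 = ereal t2" using z1 z2 by (cases z2) auto
  have tt1: "t < t1" "t1 < t2" using z1 z2 t1 t2 by auto
  have t2R: "ereal t2 < 1 + R" using z2 t2 by simp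
  define Jv where "Jv = (\<lambda>\<Xi> :: 'a op \<Rightarrow> 'b op. tov (choi \<Xi>))"
  define K where "K = Jv ` F"
  have cK: "convex K" unfolding K_def Jv_def by (rule convex_chans_image[OF conv])
  have Kne: "K \<noteq> {}" using Fne by (simp add: K_def)
  define Q where "Q = convex hull (insert 0 ((\<lambda>x. t *\<^sub>R x) ` K))"
  have cQ: "convex Q" unfolding Q_def by simp
  have Qne: "Q \<noteq> {}" unfolding Q_def by simp
  have bK: "bounded K"
  proof -
    have "norm x \<le> real CARD(('a \<times> 'b) \<times> ('a \<times> 'b)) * real CARD('a)" if xK: "x \<in> K" for x
    proof -
      obtain X where "X \<in> F" "x = tov (choi X)" using xK unfolding K_def Jv_def by blast
      then show ?thesis using norm_tov_bound[of "choi X"] chan_choi_bound[of X] Fch by blast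
    qed
    then show ?thesis unfolding bounded_iff by blast
  qed
  have bQ: "bounded Q" unfolding Q_def
    by (intro bounded_convex_hull) (simp add: bounded_scaling bK)
  define T where "T = (\<lambda>x. x - Jv \<Lambda>) ` closure Q"
  have cT: "convex T" unfolding T_def by (intro convex_translation_subtract convex_closure cQ)
  have kT: "compact T" unfolding T_def
    by (rule compact_continuous_image) (auto intro!: continuous_intros simp: bQ)
  have Tne: "T \<noteq> {}" using Qne closure_subset[of Q] unfolding T_def by auto
  have disj: "Pset \<inter> T = {}"
  proof (rule ccontr)
    assume "Pset \<inter> T \<noteq> {}"
    then obtain z where z: "z \<in> closure Q" "z - Jv \<Lambda> \<in> Pset" unfolding T_def by auto
    obtain y0 where y0: "y0 \<in> rel_interior Q" using rel_interior_eq_empty[OF cQ] Qne by blast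
    define \<epsilon> where "\<epsilon> = 1 - t / t1"
    have eps: "0 < \<epsilon>" "\<epsilon> < 1" using tt1 tpos by (auto simp: \<epsilon>_def)
    have qe: "z - \<epsilon> *\<^sub>R (z - y0) \<in> Q"
      using rel_interior_closure_convex_shrink[OF cQ y0 z(1) eps(1)] eps rel_interior_subset by auto
    obtain v k where vk: "0 \<le> v" "v \<le> 1" "k \<in> K" "z - \<epsilon> *\<^sub>R (z - y0) = (v * t) *\<^sub>R k"
      using Q_elem[OF cK Kne qe[unfolded Q_def]] by blast
    obtain v0 k0 where vk0: "0 \<le> v0" "v0 \<le> 1" "k0 \<in> K" "y0 = (v0 * t) *\<^sub>R k0"
      using Q_elem[OF cK Kne, of y0 t] y0 rel_interior_subset unfolding Q_def by blast
    obtain \<Xi> where X: "\<Xi> \<in> F" "k = Jv \<Xi>" using vk(3) by (auto simp: K_def)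
    obtain \<Xi>0 where X0: "\<Xi>0 \<in> F" "k0 = Jv \<Xi>0" using vk0(3) by (auto simp: K_def)
    have XC: "\<Xi> \<in> channels" "\<Xi>0 \<in> channels" using X X0 Fch by auto
    have JP: "Jv \<Gamma> \<in> Pset" if "\<Gamma> \<in> channels" for \<Gamma>
      using chan_choi_psd[OF that] by (simp add: Pset_def Jv_def)
    have y0P: "y0 \<in> Pset" unfolding vk0(4) using JP[OF XC(2)] X0 vk0 tpos by (auto intro: Pset_scale)
    define \<mu> where "\<mu> = v * t"
    have mu: "0 \<le> \<mu>" "\<mu> \<le> t" using vk tpos by (auto simp: \<mu>_def mult_left_le_one_le)
    have "\<mu> *\<^sub>R Jv \<Xi> - (1 - \<epsilon>) *\<^sub>R Jv \<Lambda> = (1 - \<epsilon>) *\<^sub>R (z - Jv \<Lambda>) + \<epsilon> *\<^sub>R y0"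
      using vk(4) unfolding X(2) \<mu>_def by (simp add: algebra_simps)
    also have "\<dots> \<in> Pset" using Pset_comb[OF z(2) y0P] eps by simp
    finally have D: "\<mu> *\<^sub>R Jv \<Xi> - (1 - \<epsilon>) *\<^sub>R Jv \<Lambda> \<in> Pset" .
    define D where "D = (\<lambda>p q. of_real \<mu> * choi \<Xi> p q - of_real (1 - \<epsilon>) * choi \<Lambda> p q)"
    have Dpsd: "psd D"
    proof -
      have "fromv (\<mu> *\<^sub>R Jv \<Xi> - (1 - \<epsilon>) *\<^sub>R Jv \<Lambda>) = D"
        unfolding D_def Jv_def fromv_def tov_def by (intro ext, simp only: vector_minus_component vector_scaleR_component vec_lambda_beta) (simp add: scaleR_conv_of_real)
      then show ?thesis using D by (simp add: Pset_def)
    qed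
    have trJ: "tr (choi \<Gamma>) = of_nat CARD('a)" if "\<Gamma> \<in> channels" for \<Gamma> :: "'a op \<Rightarrow> 'b op"
      using tr_choi[of \<Gamma>] that by (simp add: channels_def)
    have "tr D = of_real \<mu> * tr (choi \<Xi>) - of_real (1 - \<epsilon>) * tr (choi \<Lambda>)"
      unfolding D_def tr_def by (simp add: sum_subtractf sum_distrib_left)
    also have "\<dots> = of_real ((\<mu> - (1 - \<epsilon>)) * real CARD('a))"
      using trJ[OF XC(1)] trJ[OF L] by (simp add: algebra_simps)
    finally have "Re (tr D) = (\<mu> - (1 - \<epsilon>)) * real CARD('a)" by simp
    with tr_psd_nonneg[OF Dpsd] have mu1: "\<mu> \<ge> 1 - \<epsilon>"
      by (simp add: zero_le_mult_iff)
    have lam: "\<mu> / (1 - \<epsilon>) \<le> t1"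
    proof -
      have e: "1 - \<epsilon> = t / t1" by (simp add: \<epsilon>_def)
      have "\<mu> / (1 - \<epsilon>) = \<mu> * t1 / t" unfolding e by simp
      also have "\<dots> \<le> t * t1 / t"
        by (intro divide_right_mono mult_right_mono) (use mu tpos tt1 in auto)
      also have "\<dots> = t1" using tpos by simp
      finally show ?thesis .
    qed
    have lam1: "\<mu> / (1 - \<epsilon>) \<ge> 1" using mu1 eps by simp
    have t2g: "t2 > 1" using lam lam1 tt1 by linarith
    have P: "psd (\<lambda>p q. of_real t2 * choi \<Xi> p q - choi \<Lambda> p q)"
    proof -
      have "psd_on UNIV (\<lambda>p q. of_real (1 / (1 - \<epsilon>)) * D p q + of_real (t2 - \<mu> / (1 - \<epsilon>)) * choi \<Xi> p q)"
        by (rule psd_comb) (use Dpsd chan_choi_psd[OF XC(1)] eps lam tt1 in \<open>auto simp: psd_def\<close>)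
      moreover have "(\<lambda>p q. of_real (1 / (1 - \<epsilon>)) * D p q + of_real (t2 - \<mu> / (1 - \<epsilon>)) * choi \<Xi> p q)
          = (\<lambda>p q. of_real t2 * choi \<Xi> p q - choi \<Lambda> p q)"
        using eps unfolding D_def by (intro ext coef_aux) simp
      ultimately show ?thesis by (simp add: psd_def)
    qed
    have "R \<le> ereal (t2 - 1)"
      using make_channel[OF XC(1) L t2g P] by (intro nonadm[OF _ _ X(1)]) (use t2g in auto)
    then have "1 + R \<le> ereal t2" using add_left_mono[of R "ereal (t2 - 1)" 1] by simp
    then show False using t2R by simp
  qed
  obtain a b where ab: "\<forall>x\<in>Pset. inner a x < b" "\<forall>x\<in>T. inner a x > b"
    using separating_hyperplane_closed_compact[OF convex_Pset closed_Pset cT kT Tne disj] by blast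
  define W where "W = - a"
  have b0: "b > 0" using ab(1) zero_Pset by fastforce
  have dual: "\<forall>x. psd (fromv x) \<longrightarrow> inner W x \<ge> 0"
  proof (intro allI impI)
    fix x :: "complex^(('a \<times> 'b) \<times> ('a \<times> 'b))" assume "psd (fromv x)"
    then have xP: "x \<in> Pset" by (simp add: Pset_def)
    show "inner W x \<ge> 0"
    proof (rule ccontr)
      assume "\<not> inner W x \<ge> 0"
      then have pos: "inner a x > 0" by (simp add: W_def)
      define n where "n = b / inner a x + 1"
      have "n *\<^sub>R x \<in> Pset" using Pset_scale[OF xP] pos b0 by (simp add: n_def)
      then have "inner a (n *\<^sub>R x) < b" using ab(1) by blast
      moreover have "inner a (n *\<^sub>R x) = b + inner a x" using pos by (simp add: n_def field_simps)
      ultimately show False using pos by simp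
    qed
  qed
  obtain TT \<kappa> where TT: "TT \<in> tasks" "\<kappa> > 0"
    and pf: "\<And>\<Gamma>::'a op \<Rightarrow> 'b op. \<Gamma> \<in> channels \<Longrightarrow> p_succ \<Gamma> TT = \<kappa> * inner W (tov (choi \<Gamma>))"
    using task_from_W[OF dual] by blast
  have zQ: "0 \<in> closure Q" using closure_subset[of Q] hull_subset[of "insert 0 ((\<lambda>x. t *\<^sub>R x) ` K)" convex]
    unfolding Q_def by blast
  have "0 - Jv \<Lambda> \<in> T" unfolding T_def using zQ by blast
  then have "inner a (0 - Jv \<Lambda>) > b" using ab(2) by blast
  then have iL: "inner W (Jv \<Lambda>) > b" by (simp add: W_def)
  have iX: "t * inner W (Jv \<Xi>) < inner W (Jv \<Lambda>)" if "\<Xi> \<in> F" for \<Xi>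
  proof -
    have "t *\<^sub>R Jv \<Xi> \<in> Q" using that hull_subset[of "insert 0 ((\<lambda>x. t *\<^sub>R x) ` K)" convex]
      unfolding Q_def K_def by blast
    then have "t *\<^sub>R Jv \<Xi> - Jv \<Lambda> \<in> T" unfolding T_def using closure_subset by blast
    then have "inner a (t *\<^sub>R Jv \<Xi> - Jv \<Lambda>) > b" using ab(2) by blast
    then show ?thesis using b0 by (simp add: W_def inner_diff_right)
  qed
  show ?thesis
  proof (intro bexI[OF _ TT(1)] conjI ballI)
    show "p_succ \<Lambda> TT > 0" using pf[OF L] TT(2) iL b0 by (simp add: Jv_def)
  next
    fix \<Xi> assume X: "\<Xi> \<in> F"
    then have XC: "\<Xi> \<in> channels" using Fch by auto
    show "0 \<le> p_succ \<Xi> TT" by (rule p_succ_nonneg[OF XC TT(1)])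
    show "t * p_succ \<Xi> TT < p_succ \<Lambda> TT"
      using iX[OF X] TT(2) unfolding pf[OF XC] pf[OF L] Jv_def by (simp add: mult.left_commute)
  qed
qed

lemma ratio_upper:
  fixes F :: "(('a::finite) op \<Rightarrow> ('b::finite) op) set" and s :: real
  assumes L: "\<Lambda> \<in> channels" and Th: "\<Theta> \<in> channels" and s0: "s \<ge> 0"
    and mix: "(\<lambda>X i j. (\<Lambda> X i j + of_real s * \<Theta> X i j) / of_real (1 + s)) \<in> F"
    and T: "T \<in> tasks"
  shows "ereal (p_succ \<Lambda> T) / (SUP \<Xi>\<in>F. ereal (p_succ \<Xi> T)) \<le> 1 + ereal s"
proof -
  let ?X = "\<lambda>X i j. (\<Lambda> X i j + of_real s * \<Theta> X i j) / of_real (1 + s)"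
  let ?D = "SUP \<Xi>\<in>F. ereal (p_succ \<Xi> T)"
  have pL: "p_succ \<Lambda> T \<ge> 0" by (rule p_succ_nonneg[OF L T])
  have pT: "p_succ \<Theta> T \<ge> 0" by (rule p_succ_nonneg[OF Th T])
  have pX: "p_succ ?X T = (p_succ \<Lambda> T + s * p_succ \<Theta> T) / (1 + s)" by (rule p_succ_mix[OF s0])
  have pX2: "p_succ ?X T \<ge> p_succ \<Lambda> T / (1 + s)"
    unfolding pX using pT s0 by (intro divide_right_mono) auto
  have DX: "ereal (p_succ ?X T) \<le> ?D" by (rule SUP_upper[OF mix])
  show ?thesis
  proof (cases "p_succ \<Lambda> T = 0")
    case True
    then have e: "ereal (p_succ \<Lambda> T) = 0" by (simp add: zero_ereal_def)
    have z: "ereal (p_succ \<Lambda> T) / ?D = 0" by (simp only: e ereal_divide_zero_left)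
    have "(0::ereal) \<le> 1 + ereal s" using s0 by simp
    then show ?thesis unfolding z .
  next
    case False
    then have pLp: "p_succ \<Lambda> T > 0" using pL by simp
    have pXp: "p_succ ?X T > 0" using pX2 pLp s0 by (smt (verit) divide_pos_pos)
    show ?thesis
    proof (cases ?D)
      case (real r)
      have rX: "r \<ge> p_succ ?X T" using DX real by simp
      then have r0: "r > 0" using pXp by simp
      have "p_succ \<Lambda> T / r \<le> p_succ \<Lambda> T / p_succ ?X T"
        by (rule divide_left_mono) (use rX pLp pXp in auto)
      also have "\<dots> \<le> 1 + s"
        using pX2 pXp s0 by (simp add: divide_le_eq mult.commute pos_divide_le_eq)
      finally show ?thesis using real r0 by simp
    next
      case PInf
      then show ?thesis using s0 by simp
    next
      case MInf
      then show ?thesis using DX by simp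
    qed
  qed
qed

lemma ratio_lower:
  fixes F :: "(('a::finite) op \<Rightarrow> ('b::finite) op) set"
  assumes Fne: "F \<noteq> {}" and t: "t > 0" and pL: "p_succ \<Lambda> T > 0"
    and pX: "\<forall>\<Xi>\<in>F. 0 \<le> p_succ \<Xi> T \<and> t * p_succ \<Xi> T < p_succ \<Lambda> T"
  shows "ereal t \<le> ereal (p_succ \<Lambda> T) / (SUP \<Xi>\<in>F. ereal (p_succ \<Xi> T))"
proof -
  let ?D = "SUP \<Xi>\<in>F. ereal (p_succ \<Xi> T)"
  have up: "?D \<le> ereal (p_succ \<Lambda> T / t)"
  proof (rule SUP_least)
    fix \<Xi> assume "\<Xi> \<in> F"
    then have "t * p_succ \<Xi> T < p_succ \<Lambda> T" using pX by blast
    then show "ereal (p_succ \<Xi> T) \<le> ereal (p_succ \<Lambda> T / t)" using t by (simp add: field_simps)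
  qed
  obtain \<Xi>0 where X0: "\<Xi>0 \<in> F" using Fne by blast
  have lo: "0 \<le> ?D" using SUP_upper[OF X0, of "\<lambda>\<Xi>. ereal (p_succ \<Xi> T)"] pX X0 by (meson ereal_less_eq(5) order_trans)
  obtain r where r: "?D = ereal r" using up lo by (cases ?D) auto
  have r0: "0 \<le> r" "r \<le> p_succ \<Lambda> T / t" using up lo r by auto
  show ?thesis
  proof (cases "r = 0")
    case True
    then show ?thesis using r pL by (simp add: ereal_mult_infty)
  next
    case False
    then have rp: "r > 0" using r0 by simp
    have "t \<le> p_succ \<Lambda> T / r"
      using r0 rp t by (simp add: le_divide_eq field_simps)
    then show ?thesis using r False by simp
  qed
qed


theorem theorem15:
  fixes F :: "'k \<Rightarrow> (('a::finite) op \<Rightarrow> ('b::finite) op) set"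
    and \<Lambda> :: "'a op \<Rightarrow> 'b op"
  assumes "\<forall>k. F k \<subseteq> channels"
    and "\<forall>k. F k \<noteq> {}"
    and "\<forall>k. convex_chans (F k)"
    and "\<Lambda> \<in> channels"
    and "\<Lambda> \<notin> (\<Union>k. F k)"
  shows "(INF k. SUP T\<in>tasks. ereal (p_succ \<Lambda> T) / (SUP \<Xi>\<in>F k. ereal (p_succ \<Xi> T)))
           = 1 + robustness (\<Union>k. F k) \<Lambda>"
proof -
  note Fch = assms(1) and Fne = assms(2) and conv = assms(3) and L = assms(4)
  define f where "f = (\<lambda>k. SUP T\<in>tasks. ereal (p_succ \<Lambda> T) / (SUP \<Xi>\<in>F k. ereal (p_succ \<Xi> T)))"
  define S where "S = {s. 0 \<le> s \<and> (\<exists>\<Theta>\<in>channels.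
      (\<lambda>X i j. (\<Lambda> X i j + of_real s * \<Theta> X i j) / of_real (1 + s)) \<in> (\<Union>k. F k))}"
  define R where "R = robustness (\<Union>k. F k) \<Lambda>"
  have RS: "R = (INF s\<in>S. ereal s)"
    unfolding R_def robustness_def S_def by (rule arg_cong[where f = Inf]) auto
  have R0: "R \<ge> 0" unfolding RS by (rule INF_greatest) (simp add: S_def)
  have le: "(INF k. f k) \<le> 1 + R"
  proof (cases "S = {}")
    case True
    then have "R = \<infinity>" unfolding RS by (simp add: top_ereal_def)
    then show ?thesis by simp
  next
    case False
    have "(INF k. f k) \<le> 1 + ereal s" if sS: "s \<in> S" for s
    proof -
      obtain \<Theta> k where Th: "\<Theta> \<in> channels" "(\<lambda>X i j. (\<Lambda> X i j + of_real s * \<Theta> X i j) / of_real (1 + s)) \<in> F k"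
        and s0: "s \<ge> 0"
        using sS unfolding S_def by blast
      have "f k \<le> 1 + ereal s"
        unfolding f_def by (rule SUP_least) (rule ratio_upper[OF L Th(1) s0 Th(2)])
      then show ?thesis by (meson INF_lower UNIV_I order_trans)
    qed
    then have "(INF k. f k) \<le> (INF s\<in>S. 1 + ereal s)" by (rule INF_greatest)
    also have "\<dots> = 1 + (INF s\<in>S. ereal s)"
      by (rule INF_ereal_add_right) (use False in \<open>auto simp: S_def\<close>)
    finally show ?thesis unfolding RS .
  qed
  have ge: "1 + R \<le> f k" for k
  proof (rule dense_le_bounded[of 0])
    show "0 < 1 + R" using R0 by (cases R) auto
  next
    fix w :: ereal assume w: "0 < w" "w < 1 + R"
    then obtain t where t: "w = ereal t" by (cases w) auto
    have tpos: "t > 0" using w t by simp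
    have nonadm: "R \<le> ereal s" if "s > 0" "\<Theta> \<in> channels" "\<Xi> \<in> F k"
        "(\<lambda>X i j. (\<Lambda> X i j + of_real s * \<Theta> X i j) / of_real (1 + s)) = \<Xi>" for s \<Theta> \<Xi>
    proof -
      have "s \<in> S" unfolding S_def using that by auto
      then show ?thesis unfolding RS by (rule INF_lower)
    qed
    obtain T where T: "T \<in> tasks" "p_succ \<Lambda> T > 0" "\<forall>\<Xi>\<in>F k. 0 \<le> p_succ \<Xi> T \<and> t * p_succ \<Xi> T < p_succ \<Lambda> T"
      using hard[of "F k" \<Lambda> t R] Fch Fne conv L tpos w t nonadm by blast
    have "ereal t \<le> ereal (p_succ \<Lambda> T) / (SUP \<Xi>\<in>F k. ereal (p_succ \<Xi> T))"
      by (rule ratio_lower[OF _ tpos T(2,3)]) (use Fne in auto)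
    also have "\<dots> \<le> f k" unfolding f_def by (rule SUP_upper[OF T(1)])
    finally show "w \<le> f k" using t by simp
  qed
  have "1 + R \<le> (INF k. f k)" by (rule INF_greatest) (rule ge)
  then have "(INF k. f k) = 1 + R" using le by simp
  then show ?thesis unfolding f_def R_def .
qed

end
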